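(* Let $1\le p\le\infty$. For all seed functions $f,f'\in\mathcal{L}^p(I)$ and every base function $b\in\mathcal{L}^p(I)$, $$\|(f*_Tb)-(f'*_Tb)\|_p\le\frac{1}{1-\Lambda}\|f-f'\|_p,$$ and for all base functions $b,b'\in\mathcal{L}^p(I)$ and every seed function $f\in\mathcal{L}^p(I)$, $$\|(f*_Tb)-(f*_Tb')\|_p\le\frac{\Lambda}{1-\Lambda}\|b-b'\|_p.$$ For $0<p<1$ the same inequalities hold with $\|g-h\|_p$ replaced by $d_p(g,h)=\int_I|g-h|^p\,dx$ and $\Lambda$ replaced by $\Lambda^p$.
   Context: Let $N\ge 2$, $I=[x_0,x_N]\subset\mathbb{R}$ and $\Delta: x_0<x_1<\dots<x_N$ a partition of $I$. For $n=1,\dots,N$ let $L_n(x)=a_nx+b_n$ be the affine map with $L_n(x_0)=x_{n-1}$, $L_n(x_N)=x_n$; set $I_1=[x_0,x_1]$, $I_n=(x_{n-1},x_n]$ for $n\ge 2$. Let $\alpha=(\alpha_1,\dots,\alpha_N)\in(\mathcal{L}^\infty(I))^N$ with $\Lambda:=\operatorname{ess\,sup}\{|\alpha_n(x)|:x\in I,\ n=1,\dots,N\}<1$. For $0<p\le\infty$ and $f,b\in\mathcal{L}^p(I)$, the fractal convolution $f*_Tb$ is the unique fixed point in $\mathcal{L}^p(I)$ of the contraction $Tg(x):=f(x)+\alpha_n(L_n^{-1}(x))\,(g-b)(L_n^{-1}(x))$, $x\in I_n$, $n=1,\dots,N$; i.e. $(f*_Tb)(x)=f(x)+\alpha_n(L_n^{-1}(x))((f*_Tb)-b)(L_n^{-1}(x))$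 on $I_n$. The partition, the maps $L_n$ and $\alpha$ are fixed. *)

theory Defs
  imports "HOL-Analysis.Analysis"
begin

definition Imeas :: "(nat \<Rightarrow> real) \<Rightarrow> nat \<Rightarrow> real measure" where
  "Imeas x N = lebesgue_on {x 0 .. x N}"

definition Ipiece :: "(nat \<Rightarrow> real) \<Rightarrow> nat \<Rightarrow> real set" where
  "Ipiece x n = (if n = 1 then {x 0 .. x 1} else {x (n - 1) <.. x n})"

text \<open>L_n(t) = a_n t + b_n with L_n(x_0) = x_(n-1), L_n(x_N) = x_n.\<close>
definition Lmap :: "(nat \<Rightarrow> real) \<Rightarrow> nat \<Rightarrow> nat \<Rightarrow> real \<Rightarrow> real" where
  "Lmap x N n t = x (n - 1) + (x n - x (n - 1)) / (x N - x 0) * (t - x 0)"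

definition Linv :: "(nat \<Rightarrow> real) \<Rightarrow> nat \<Rightarrow> nat \<Rightarrow> real \<Rightarrow> real" where
  "Linv x N n y = x 0 + (x N - x 0) / (x n - x (n - 1)) * (y - x (n - 1))"

text \<open>Membership in L^p(I), 0 < p <= infinity (as functions, not classes).\<close>
definition Lp_mem :: "real measure \<Rightarrow> ennreal \<Rightarrow> (real \<Rightarrow> real) \<Rightarrow> bool" where
  "Lp_mem M p g \<longleftrightarrow> g \<in> borel_measurable M \<and>
     (if p = (top::ennreal) then (\<exists>C. AE t in M. \<bar>g t\<bar> \<le> C)
      else integrable M (\<lambda>t. \<bar>g t\<bar> powr enn2real p))"

definition Lp_norm :: "real measure \<Rightarrow> ennreal \<Rightarrow> (real \<Rightarrow> real) \<Rightarrow> real" where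
  "Lp_norm M p g =
     (if p = (top::ennreal) then Inf {C. AE t in M. \<bar>g t\<bar> \<le> C}
      else (\<integral>t. \<bar>g t\<bar> powr enn2real p \<partial>M) powr (1 / enn2real p))"

definition d_p :: "real measure \<Rightarrow> real \<Rightarrow> (real \<Rightarrow> real) \<Rightarrow> (real \<Rightarrow> real) \<Rightarrow> real" where
  "d_p M p g h = (\<integral>t. \<bar>g t - h t\<bar> powr p \<partial>M)"

definition Lam :: "(nat \<Rightarrow> real) \<Rightarrow> nat \<Rightarrow> (nat \<Rightarrow> real \<Rightarrow> real) \<Rightarrow> real" where
  "Lam x N \<alpha> = Inf {C. AE t in Imeas x N. \<forall>n\<in>{1..N}. \<bar>\<alpha> n t\<bar> \<le> C}"

definition Top :: "(nat \<Rightarrow> real) \<Rightarrow> nat \<Rightarrow> (nat \<Rightarrow> real \<Rightarrow> real) \<Rightarrow>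
    (real \<Rightarrow> real) \<Rightarrow> (real \<Rightarrow> real) \<Rightarrow> (real \<Rightarrow> real) \<Rightarrow> real \<Rightarrow> real" where
  "Top x N \<alpha> f b g y = f y + (\<Sum>n\<in>{1..N}. if y \<in> Ipiece x n
       then \<alpha> n (Linv x N n y) * (g (Linv x N n y) - b (Linv x N n y)) else 0)"

text \<open>The fractal convolution f *_T b: the (a.e. unique) fixed point of T in L^p(I).\<close>
definition fconv :: "(nat \<Rightarrow> real) \<Rightarrow> nat \<Rightarrow> (nat \<Rightarrow> real \<Rightarrow> real) \<Rightarrow> ennreal \<Rightarrow>
    (real \<Rightarrow> real) \<Rightarrow> (real \<Rightarrow> real) \<Rightarrow> real \<Rightarrow> real" where
  "fconv x N \<alpha> p f b = (SOME g. Lp_mem (Imeas x N) p g \<and>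
       (AE y in Imeas x N. Top x N \<alpha> f b g y = g y))"

end

theory Submission
  imports Defs "HOL-Analysis.Analysis"
begin


lemma conv2:
  fixes a b t q :: real
  assumes a: "0 \<le> a" and b: "0 \<le> b" and t: "0 < t" "t < 1" and q: "1 \<le> q"
  shows "((1-t)*a + t*b) powr q \<le> (1-t) * a powr q + t * b powr q"
proof (cases "a = 0 \<or> b = 0")
  case False
  then have "a \<in> {0<..}" "b \<in> {0<..}" using a b by auto
  from convex_onD[OF powr_convex[OF q] _ _ this, of t] t show ?thesis by simp
next
  case True
  have tq: "t powr q \<le> t" using t q by (intro powr_le_one_le) auto
  have tq': "(1-t) powr q \<le> 1-t" using t q by (intro powr_le_one_le) auto
  show ?thesis
  proof (cases "a = 0")
    case True
    have "(t*b) powr q = t powr q * b powr q" using t b by (simp add: powr_mult)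
    also have "\<dots> \<le> t * b powr q" using tq by (intro mult_right_mono) auto
    finally show ?thesis using True q by simp
  next
    case False
    then have "b = 0" using True by simp
    have "((1-t)*a) powr q = (1-t) powr q * a powr q" using t a by (simp add: powr_mult)
    also have "\<dots> \<le> (1-t) * a powr q" using tq' by (intro mult_right_mono) auto
    finally show ?thesis using \<open>b = 0\<close> q by simp
  qed
qed

lemma mink_pt:
  fixes a b t q :: real
  assumes t: "0 < t" "t < 1" and q: "1 \<le> q"
  shows "\<bar>a + b\<bar> powr q \<le> (1-t) powr (1-q) * \<bar>a\<bar> powr q + t powr (1-q) * \<bar>b\<bar> powr q"
proof -
  have "\<bar>a + b\<bar> powr q \<le> (\<bar>a\<bar> + \<bar>b\<bar>) powr q" using q by (intro powr_mono2) auto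
  also have "\<bar>a\<bar> + \<bar>b\<bar> = (1-t) * (\<bar>a\<bar>/(1-t)) + t * (\<bar>b\<bar>/t)" using t by simp
  also have "((1-t) * (\<bar>a\<bar>/(1-t)) + t * (\<bar>b\<bar>/t)) powr q \<le> (1-t) * (\<bar>a\<bar>/(1-t)) powr q + t * (\<bar>b\<bar>/t) powr q"
    using t q by (intro conv2) auto
  also have "(1-t) * (\<bar>a\<bar>/(1-t)) powr q = (1-t) powr (1-q) * \<bar>a\<bar> powr q"
    using t by (simp add: powr_divide powr_diff field_simps)
  also have "t * (\<bar>b\<bar>/t) powr q = t powr (1-q) * \<bar>b\<bar> powr q"
    using t by (simp add: powr_divide powr_diff field_simps)
  finally show ?thesis .
qed

lemma sub_pt:
  fixes a b q :: real
  assumes q: "0 < q" "q \<le> 1"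
  shows "\<bar>a + b\<bar> powr q \<le> \<bar>a\<bar> powr q + \<bar>b\<bar> powr q"
proof -
  have "\<bar>a + b\<bar> powr q \<le> (\<bar>a\<bar> + \<bar>b\<bar>) powr q" using q by (intro powr_mono2) auto
  also have "\<dots> \<le> \<bar>a\<bar> powr q + \<bar>b\<bar> powr q"
  proof (cases "\<bar>a\<bar> + \<bar>b\<bar> = 0")
    case True then have "a = 0" "b = 0" by auto
    then show ?thesis by simp
  next
    case False
    define s where "s = \<bar>a\<bar> + \<bar>b\<bar>"
    have s: "s > 0" using False by (simp add: s_def)
    have ka: "\<bar>a\<bar> * s powr (q - 1) \<le> \<bar>a\<bar> powr q"
    proof (cases "a = 0")
      case False
      have "s powr (q-1) \<le> \<bar>a\<bar> powr (q-1)"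
        using False q s_def by (intro powr_mono2') auto  
      then have "\<bar>a\<bar> * s powr (q - 1) \<le> \<bar>a\<bar> * \<bar>a\<bar> powr (q-1)" by (intro mult_left_mono) auto
      also have "\<dots> = \<bar>a\<bar> powr q" using False by (simp add: powr_diff)
      finally show ?thesis .
    qed simp
    have kb: "\<bar>b\<bar> * s powr (q - 1) \<le> \<bar>b\<bar> powr q"
    proof (cases "b = 0")
      case False
      have "s powr (q-1) \<le> \<bar>b\<bar> powr (q-1)"
        using False q s_def by (intro powr_mono2') auto  
      then have "\<bar>b\<bar> * s powr (q - 1) \<le> \<bar>b\<bar> * \<bar>b\<bar> powr (q-1)" by (intro mult_left_mono) auto
      also have "\<dots> = \<bar>b\<bar> powr q" using False by (simp add: powr_diff)
      finally show ?thesis .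
    qed simp
    have "s powr q = s * s powr (q - 1)" using s by (simp add: powr_diff)
    also have "\<dots> = \<bar>a\<bar> * s powr (q - 1) + \<bar>b\<bar> * s powr (q - 1)" by (simp add: s_def algebra_simps)
    finally show ?thesis using ka kb s_def by simp
  qed
  finally show ?thesis .
qed

lemma two_pt:
  fixes a b q :: real
  assumes q: "0 < q"
  shows "\<bar>a + b\<bar> powr q \<le> 2 powr q * (\<bar>a\<bar> powr q + \<bar>b\<bar> powr q)"
proof -
  have "\<bar>a + b\<bar> \<le> 2 * max \<bar>a\<bar> \<bar>b\<bar>" by auto
  then have "\<bar>a + b\<bar> powr q \<le> (2 * max \<bar>a\<bar> \<bar>b\<bar>) powr q" using q by (intro powr_mono2) auto
  also have "\<dots> = 2 powr q * max \<bar>a\<bar> \<bar>b\<bar> powr q" by (simp add: powr_mult)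
  also have "max \<bar>a\<bar> \<bar>b\<bar> powr q \<le> \<bar>a\<bar> powr q + \<bar>b\<bar> powr q" by (cases "\<bar>a\<bar> \<le> \<bar>b\<bar>") (auto simp: max_def)
  finally show ?thesis by simp
qed



lemma powr_term:
  fixes X S q :: real assumes "0 < X" "0 < S"
  shows "(X / S) powr (1 - q) * X powr q = X * S powr (q - 1)"
proof -
  have "(X / S) powr (1 - q) * X powr q = exp ((1-q) * (ln X - ln S) + q * ln X)"
    using assms by (simp add: powr_def ln_div exp_add)
  also have "(1-q) * (ln X - ln S) + q * ln X = ln X + (q - 1) * ln S" by (simp add: algebra_simps)
  also have "exp \<dots> = X * S powr (q - 1)" using assms by (simp add: powr_def exp_add)
  finally show ?thesis .
qed

definition Lq :: "'a measure \<Rightarrow> real \<Rightarrow> ('a \<Rightarrow> real) \<Rightarrow> bool" where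
  "Lq M q u \<longleftrightarrow> u \<in> borel_measurable M \<and> integrable M (\<lambda>t. \<bar>u t\<bar> powr q)"

definition nq :: "'a measure \<Rightarrow> real \<Rightarrow> ('a \<Rightarrow> real) \<Rightarrow> real" where
  "nq M q u = (\<integral>t. \<bar>u t\<bar> powr q \<partial>M)"

lemma Lq_add: assumes q: "0 < q" and u: "Lq M q u" and v: "Lq M q v" shows "Lq M q (\<lambda>t. u t + v t)"
proof -
  have m: "(\<lambda>t. u t + v t) \<in> borel_measurable M" using u v by (auto simp: Lq_def)
  have "integrable M (\<lambda>t. 2 powr q * (\<bar>u t\<bar> powr q + \<bar>v t\<bar> powr q))"
    using u v by (auto simp: Lq_def)
  moreover have mm: "(\<lambda>t. \<bar>u t + v t\<bar> powr q) \<in> borel_measurable M" using m by measurable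
  moreover have "AE t in M. norm (\<bar>u t + v t\<bar> powr q) \<le> norm (2 powr q * (\<bar>u t\<bar> powr q + \<bar>v t\<bar> powr q))"
  proof (rule AE_I2)
    fix t
    have "norm (\<bar>u t + v t\<bar> powr q) = \<bar>u t + v t\<bar> powr q" by simp
    also have "\<dots> \<le> 2 powr q * (\<bar>u t\<bar> powr q + \<bar>v t\<bar> powr q)" by (rule two_pt[OF q])
    also have "\<dots> = norm (2 powr q * (\<bar>u t\<bar> powr q + \<bar>v t\<bar> powr q))" by simp
    finally show "norm (\<bar>u t + v t\<bar> powr q) \<le> norm (2 powr q * (\<bar>u t\<bar> powr q + \<bar>v t\<bar> powr q))" .
  qed
  ultimately have "integrable M (\<lambda>t. \<bar>u t + v t\<bar> powr q)"
    by (rule Bochner_Integration.integrable_bound)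
  then show ?thesis using m by (simp add: Lq_def)
qed

lemma Lq_minus: "Lq M q u \<Longrightarrow> Lq M q (\<lambda>t. - u t)" by (simp add: Lq_def)

lemma Lq_diff: "0 < q \<Longrightarrow> Lq M q u \<Longrightarrow> Lq M q v \<Longrightarrow> Lq M q (\<lambda>t. u t - v t)"
  using Lq_add[of q M u "\<lambda>t. - v t"] Lq_minus[of M q v] by simp

lemma nq_nn: "0 \<le> nq M q u" by (simp add: nq_def)

lemma nq_cong: "u \<in> borel_measurable M \<Longrightarrow> v \<in> borel_measurable M \<Longrightarrow> AE t in M. u t = v t \<Longrightarrow> nq M q u = nq M q v"
  unfolding nq_def by (rule integral_cong_AE) (auto elim!: eventually_mono)

lemma nq_zero: assumes "Lq M q u" "nq M q u = 0" shows "AE t in M. u t = 0"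
proof -
  have i: "integrable M (\<lambda>t. \<bar>u t\<bar> powr q)" using assms by (simp add: Lq_def)
  have "AE t in M. \<bar>u t\<bar> powr q = 0"
    using integral_nonneg_eq_0_iff_AE[OF i] assms(2) by (simp add: nq_def)
  then show ?thesis by (rule eventually_mono) simp
qed

lemma nq_sub: assumes q: "0 < q" "q \<le> 1" and u: "Lq M q u" and v: "Lq M q v"
  shows "nq M q (\<lambda>t. u t + v t) \<le> nq M q u + nq M q v"
proof -
  have i: "integrable M (\<lambda>t. \<bar>u t + v t\<bar> powr q)" using Lq_add[OF q(1) u v] by (simp add: Lq_def)
  have "nq M q (\<lambda>t. u t + v t) \<le> (\<integral>t. \<bar>u t\<bar> powr q + \<bar>v t\<bar> powr q \<partial>M)"
    unfolding nq_def by (rule integral_mono) (use i u v sub_pt[OF q] in \<open>auto simp: Lq_def\<close>)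
  also have "\<dots> = nq M q u + nq M q v" unfolding nq_def by (rule Bochner_Integration.integral_add) (use u v in \<open>auto simp: Lq_def\<close>)
  finally show ?thesis .
qed

lemma nq_mink: assumes q: "1 \<le> q" and u: "Lq M q u" and v: "Lq M q v"
  shows "nq M q (\<lambda>t. u t + v t) powr (1/q) \<le> nq M q u powr (1/q) + nq M q v powr (1/q)"
proof -
  have q0: "0 < q" using q by simp
  have um: "u \<in> borel_measurable M" and vm: "v \<in> borel_measurable M" using u v by (auto simp: Lq_def)
  show ?thesis
  proof (cases "nq M q u = 0 \<or> nq M q v = 0")
    case True
    then show ?thesis
    proof
      assume 0: "nq M q u = 0"
      have "nq M q (\<lambda>t. u t + v t) = nq M q v"
        by (rule nq_cong) (use um vm nq_zero[OF u 0] in \<open>auto elim!: eventually_mono\<close>)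
      then show ?thesis using 0 q by simp
    next
      assume 0: "nq M q v = 0"
      have "nq M q (\<lambda>t. u t + v t) = nq M q u"
        by (rule nq_cong) (use um vm nq_zero[OF v 0] in \<open>auto elim!: eventually_mono\<close>)
      then show ?thesis using 0 q by simp
    qed
  next
    case False
    define A where "A = nq M q u powr (1/q)"
    define B where "B = nq M q v powr (1/q)"
    have A: "A > 0" and B: "B > 0" using False nq_nn[of M q u] nq_nn[of M q v] by (auto simp: A_def B_def)
    have Aq: "nq M q u = A powr q" using nq_nn[of M q u] q0 by (simp add: A_def powr_powr)
    have Bq: "nq M q v = B powr q" using nq_nn[of M q v] q0 by (simp add: B_def powr_powr)
    define t where "t = B / (A + B)"
    have t: "0 < t" "t < 1" using A B by (auto simp: t_def)
    have t1: "1 - t = A / (A + B)" using A B by (simp add: t_def field_simps)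
    have i: "integrable M (\<lambda>t. \<bar>u t + v t\<bar> powr q)" using Lq_add[OF q0 u v] by (simp add: Lq_def)
    have "nq M q (\<lambda>t. u t + v t) \<le> (\<integral>s. (1-t) powr (1-q) * \<bar>u s\<bar> powr q + t powr (1-q) * \<bar>v s\<bar> powr q \<partial>M)"
      unfolding nq_def by (rule integral_mono) (use i u v mink_pt[OF t q] in \<open>auto simp: Lq_def\<close>)
    also have "\<dots> = (1-t) powr (1-q) * nq M q u + t powr (1-q) * nq M q v"
      unfolding nq_def using u v by (simp add: Lq_def)
    also have "\<dots> = A * (A + B) powr (q - 1) + B * (A + B) powr (q - 1)"
      unfolding t1 Aq Bq using A B by (simp add: powr_term t_def)
    also have "\<dots> = (A + B) * (A + B) powr (q - 1)" by (simp add: algebra_simps)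
    also have "\<dots> = (A + B) powr q" using A B by (simp add: powr_diff)
    finally have "nq M q (\<lambda>t. u t + v t) \<le> (A + B) powr q" .
    then have "nq M q (\<lambda>t. u t + v t) powr (1/q) \<le> ((A + B) powr q) powr (1/q)"
      using q0 nq_nn by (intro powr_mono2) auto
    also have "\<dots> = A + B" using A B q0 by (simp add: powr_powr)
    finally show ?thesis by (simp add: A_def B_def)
  qed
qed

lemma AE_Inf_gen:
  fixes Q :: "'a \<Rightarrow> real"
  assumes ex: "\<exists>C. AE t in M. Q t \<le> C" and nn: "\<And>t. 0 \<le> Q t" and pos: "emeasure M (space M) \<noteq> 0"
  shows "AE t in M. Q t \<le> Inf {C. AE t in M. Q t \<le> C}" and "0 \<le> Inf {C. AE t in M. Q t \<le> C}"
    and "\<And>C. (AE t in M. Q t \<le> C) \<Longrightarrow> Inf {C. AE t in M. Q t \<le> C} \<le> C"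
proof -
  define S where "S = {C. AE t in M. Q t \<le> C}"
  have lb: "0 \<le> C" if "C \<in> S" for C
  proof (rule ccontr)
    assume "\<not> 0 \<le> C"
    then have "AE t in M. False" using that nn unfolding S_def
      by (auto elim!: eventually_mono) (meson le_less_trans not_le)
    then have "ae_filter M = bot" by (simp add: trivial_limit_def)
    then show False using pos ae_filter_eq_bot_iff by blast
  qed
  have ne: "S \<noteq> {}" using ex by (auto simp: S_def)
  have bdd: "bdd_below S" using lb by (auto simp: bdd_below_def)
  show "\<And>C. (AE t in M. Q t \<le> C) \<Longrightarrow> Inf {C. AE t in M. Q t \<le> C} \<le> C"
    using bdd unfolding S_def by (intro cInf_lower) auto
  show "0 \<le> Inf {C. AE t in M. Q t \<le> C}"
    using ne lb unfolding S_def[symmetric] by (intro cInf_greatest) auto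
  have "AE t in M. Q t \<le> Inf S + inverse (real (Suc k))" for k
  proof -
    have "Inf S < Inf S + inverse (real (Suc k))" by simp
    then obtain c where "c \<in> S" "c < Inf S + inverse (real (Suc k))"
      using cInf_lessD[OF ne] by blast
    then show ?thesis unfolding S_def by (auto elim!: eventually_mono)
  qed
  then have "AE t in M. \<forall>k. Q t \<le> Inf S + inverse (real (Suc k))"
    by (simp add: AE_all_countable)
  then show "AE t in M. Q t \<le> Inf {C. AE t in M. Q t \<le> C}"
    unfolding S_def[symmetric]
  proof (rule eventually_mono)
    fix t assume H: "\<forall>k. Q t \<le> Inf S + inverse (real (Suc k))"
    show "Q t \<le> Inf S"
    proof (rule ccontr)
      assume "\<not> Q t \<le> Inf S"
      then obtain k where "inverse (real (Suc k)) < Q t - Inf S"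
        using reals_Archimedean[of "Q t - Inf S"] by auto
      then show False using H[rule_format, of k] by simp
    qed
  qed
qed

lemma telescope_real: "(\<Sum>n\<in>{1..(m::nat)}. (f n - f (n-1)::real)) = f m - f 0"
  by (induction m) (auto simp: sum.cl_ivl_Suc)


definition ninf :: "'a measure \<Rightarrow> ('a \<Rightarrow> real) \<Rightarrow> real" where
  "ninf M u = Inf {C. AE t in M. \<bar>u t\<bar> \<le> C}"

definition Linf :: "'a measure \<Rightarrow> ('a \<Rightarrow> real) \<Rightarrow> bool" where
  "Linf M u \<longleftrightarrow> u \<in> borel_measurable M \<and> (\<exists>C. AE t in M. \<bar>u t\<bar> \<le> C)"

lemma ninf_AE: "Linf M u \<Longrightarrow> emeasure M (space M) \<noteq> 0 \<Longrightarrow> AE t in M. \<bar>u t\<bar> \<le> ninf M u"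
  unfolding ninf_def Linf_def by (rule AE_Inf_gen(1)) auto

lemma ninf_nn: "Linf M u \<Longrightarrow> emeasure M (space M) \<noteq> 0 \<Longrightarrow> 0 \<le> ninf M u"
  unfolding ninf_def Linf_def by (rule AE_Inf_gen(2)) auto

lemma ninf_le: "AE t in M. \<bar>u t\<bar> \<le> C \<Longrightarrow> emeasure M (space M) \<noteq> 0 \<Longrightarrow> ninf M u \<le> C"
  unfolding ninf_def by (rule AE_Inf_gen(3)) auto

lemma Linf_add: "Linf M u \<Longrightarrow> Linf M v \<Longrightarrow> Linf M (\<lambda>t. u t + v t)"
  unfolding Linf_def
proof (elim conjE exE, intro conjI exI)
  fix C D assume "AE t in M. \<bar>u t\<bar> \<le> C" "AE t in M. \<bar>v t\<bar> \<le> D"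
  then show "AE t in M. \<bar>u t + v t\<bar> \<le> C + D" by eventually_elim auto
qed auto

lemma Linf_minus: "Linf M u \<Longrightarrow> Linf M (\<lambda>t. - u t)" by (simp add: Linf_def)

lemma Linf_diff: "Linf M u \<Longrightarrow> Linf M v \<Longrightarrow> Linf M (\<lambda>t. u t - v t)"
  using Linf_add[of M u "\<lambda>t. - v t"] Linf_minus[of M v] by simp

lemma ninf_tri: assumes "Linf M u" "Linf M v" "emeasure M (space M) \<noteq> 0"
  shows "ninf M (\<lambda>t. u t + v t) \<le> ninf M u + ninf M v"
proof (rule ninf_le[OF _ assms(3)])
  show "AE t in M. \<bar>u t + v t\<bar> \<le> ninf M u + ninf M v"
    using ninf_AE[OF assms(1,3)] ninf_AE[OF assms(2,3)] by eventually_elim auto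
qed

lemma ninf_cong: "AE t in M. u t = v t \<Longrightarrow> Linf M v \<Longrightarrow> emeasure M (space M) \<noteq> 0 \<Longrightarrow> ninf M u \<le> ninf M v"
proof -
  assume a: "AE t in M. u t = v t" "Linf M v" "emeasure M (space M) \<noteq> 0"
  have "AE t in M. \<bar>v t\<bar> \<le> ninf M v" by (rule ninf_AE[OF a(2,3)])
  with a(1) have "AE t in M. \<bar>u t\<bar> \<le> ninf M v" by eventually_elim simp
  then show ?thesis by (rule ninf_le[OF _ a(3)])
qed

lemma ninf_minus: "ninf M (\<lambda>t. - u t) = ninf M u" by (simp add: ninf_def)

lemma alg1: fixes X V L :: real assumes "X \<le> V + L * X" "L < 1" shows "X \<le> 1 / (1 - L) * V"
proof -
  have le: "(1 - L) * X \<le> V" using assms(1) by (simp add: algebra_simps)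
  have "X = ((1 - L) * X) / (1 - L)" using assms(2) by simp
  also have "\<dots> \<le> V / (1 - L)" using le assms(2) by (intro divide_right_mono) auto
  finally show ?thesis by simp
qed

lemma alg2: fixes X W L :: real assumes "X \<le> L * X + L * W" "L < 1" shows "X \<le> L / (1 - L) * W"
proof -
  have le: "(1 - L) * X \<le> L * W" using assms(1) by (simp add: algebra_simps)
  have "X = ((1 - L) * X) / (1 - L)" using assms(2) by simp
  also have "\<dots> \<le> (L * W) / (1 - L)" using le assms(2) by (intro divide_right_mono) auto
  finally show ?thesis by simp
qed



locale fcs =
  fixes x :: "nat \<Rightarrow> real" and N :: nat and \<alpha> :: "nat \<Rightarrow> real \<Rightarrow> real"
  assumes N2: "N \<ge> 2" and incr: "\<forall>i<N. x i < x (Suc i)"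
    and alpha_mem: "\<forall>n\<in>{1..N}. Lp_mem (Imeas x N) top (\<alpha> n)"
    and Lam_lt: "Lam x N \<alpha> < 1"
begin

lemma x_mono: "i < j \<Longrightarrow> j \<le> N \<Longrightarrow> x i < x j"
proof (induction j)
  case 0 then show ?case by simp
next
  case (Suc j)
  then have "x j < x (Suc j)" using incr by auto
  then show ?case using Suc by (cases "i < j") (auto simp: less_Suc_eq)
qed

lemma x_le: "i \<le> j \<Longrightarrow> j \<le> N \<Longrightarrow> x i \<le> x j"
  using x_mono by (cases "i = j") (auto simp: order.order_iff_strict)

lemma x0N: "x 0 < x N" using x_mono N2 by auto

lemma piece_sub: "n \<in> {1..N} \<Longrightarrow> Ipiece x n \<subseteq> {x (n-1) .. x n}"
  by (auto simp: Ipiece_def)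

lemma piece_len: "n \<in> {1..N} \<Longrightarrow> x (n-1) < x n"
  using x_mono by auto

lemma int_sub: "n \<in> {1..N} \<Longrightarrow> {x (n-1) .. x n} \<subseteq> {x 0 .. x N}"
  using x_le by auto

lemma piece_disj: "n \<in> {1..N} \<Longrightarrow> m \<in> {1..N} \<Longrightarrow> n \<noteq> m \<Longrightarrow> y \<in> Ipiece x n \<Longrightarrow> y \<notin> Ipiece x m"
proof -
  have *: "y \<notin> Ipiece x m" if "n < m" "n \<in> {1..N}" "m \<in> {1..N}" "y \<in> Ipiece x n" for n m
  proof -
    have "y \<le> x n" using piece_sub[OF that(2)] that(4) by auto
    moreover have "x n \<le> x (m-1)" using x_le that by auto
    moreover have "m \<noteq> 1" using that by auto
    ultimately show ?thesis by (auto simp: Ipiece_def)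
  qed
  have **: "y \<notin> Ipiece x n" if "m < n" "n \<in> {1..N}" "m \<in> {1..N}" "y \<in> Ipiece x m" for n m
  proof -
    have "y \<le> x m" using piece_sub[OF that(3)] that(4) by auto
    moreover have "x m \<le> x (n-1)" using x_le that by auto
    moreover have "n \<noteq> 1" using that by auto
    ultimately show ?thesis by (auto simp: Ipiece_def)
  qed
  assume "n \<in> {1..N}" "m \<in> {1..N}" "n \<noteq> m" "y \<in> Ipiece x n"
  then show ?thesis using *[of n m] **[of m n] by (cases "n < m") auto
qed

lemma piece_cover: "y \<in> {x 0 .. x N} \<Longrightarrow> \<exists>n\<in>{1..N}. y \<in> Ipiece x n"
proof -
  assume y: "y \<in> {x 0 .. x N}"
  show ?thesis
  proof (cases "y \<le> x 1")
    case True then show ?thesis using y N2 by (auto simp: Ipiece_def intro!: bexI[of _ 1])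
  next
    case False
    define n where "n = (LEAST n. y \<le> x n)"
    have yn: "y \<le> x n" unfolding n_def by (rule LeastI[of _ N]) (use y in auto)
    have nN: "n \<le> N" unfolding n_def by (rule Least_le) (use y in auto)
    have n0: "n \<noteq> 0"
    proof
      assume "n = 0"
      then show False using False yn y x_mono[of 0 1] N2 by auto
    qed
    have n1: "n \<noteq> 0" "n \<noteq> 1" using n0 False yn by auto
    have "\<not> y \<le> x (n-1)" unfolding n_def
      by (rule not_less_Least) (use n1 in \<open>auto simp: n_def\<close>)
    then show ?thesis using yn nN n1 by (auto simp: Ipiece_def intro!: bexI[of _ n])
  qed
qed

lemma piece_I: "n \<in> {1..N} \<Longrightarrow> Ipiece x n \<subseteq> {x 0 .. x N}"
  using piece_sub int_sub by blast

definition sl :: "nat \<Rightarrow> real" where "sl n = (x N - x 0) / (x n - x (n-1))"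

lemma sl_pos: "n \<in> {1..N} \<Longrightarrow> sl n > 0"
  using x0N piece_len by (auto simp: sl_def)

lemma Linv_eq: "Linv x N n y = (x 0 - sl n * x (n-1)) + sl n * y"
proof -
  have "Linv x N n y = x 0 + sl n * (y - x (n-1))" by (simp add: Linv_def sl_def)
  then show ?thesis by (simp add: algebra_simps)
qed

lemma Linv_in: "n \<in> {1..N} \<Longrightarrow> y \<in> {x (n-1) .. x n} \<Longrightarrow> Linv x N n y \<in> {x 0 .. x N}"
proof -
  assume n: "n \<in> {1..N}" and y: "y \<in> {x (n-1) .. x n}"
  have s: "sl n > 0" using sl_pos n .
  have "sl n * (y - x (n-1)) \<le> sl n * (x n - x (n-1))"
    using s y by (intro mult_left_mono) auto
  also have "\<dots> = x N - x 0" using piece_len[OF n] by (simp add: sl_def)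
  finally have a: "sl n * (y - x (n-1)) \<le> x N - x 0" .
  have b: "0 \<le> sl n * (y - x (n-1))" using s y by auto
  show ?thesis using a b by (simp add: Linv_def sl_def algebra_simps)
qed

definition Sop :: "(real \<Rightarrow> real) \<Rightarrow> real \<Rightarrow> real" where
  "Sop u y = (\<Sum>n\<in>{1..N}. if y \<in> Ipiece x n then \<alpha> n (Linv x N n y) * u (Linv x N n y) else 0)"

lemma Sop_at: "n \<in> {1..N} \<Longrightarrow> y \<in> Ipiece x n \<Longrightarrow> Sop u y = \<alpha> n (Linv x N n y) * u (Linv x N n y)"
  unfolding Sop_def
  apply (subst sum.remove[of _ n], simp, simp)
  apply (subst sum.neutral)
  using piece_disj by auto

lemma Sop_out: "\<forall>n\<in>{1..N}. y \<notin> Ipiece x n \<Longrightarrow> Sop u y = 0"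
  unfolding Sop_def by auto

lemma Sop_cases: "(\<And>n. n \<in> {1..N} \<Longrightarrow> y \<in> Ipiece x n \<Longrightarrow> P (\<alpha> n (Linv x N n y)) (Linv x N n y)) \<Longrightarrow> (\<forall>n\<in>{1..N}. y \<notin> Ipiece x n) \<Longrightarrow> P' \<Longrightarrow> True"
  by simp

lemma Sop_add: "Sop (\<lambda>t. u t + v t) y = Sop u y + Sop v y"
  by (cases "\<exists>n\<in>{1..N}. y \<in> Ipiece x n") (auto simp: Sop_at Sop_out algebra_simps)

lemma Sop_diff: "Sop (\<lambda>t. u t - v t) y = Sop u y - Sop v y"
  by (cases "\<exists>n\<in>{1..N}. y \<in> Ipiece x n") (auto simp: Sop_at Sop_out algebra_simps)

lemma Sop_minus: "Sop (\<lambda>t. - u t) y = - Sop u y"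
  by (cases "\<exists>n\<in>{1..N}. y \<in> Ipiece x n") (auto simp: Sop_at Sop_out algebra_simps)

lemma Sop_zero: "Sop (\<lambda>t. 0) y = 0"
  by (cases "\<exists>n\<in>{1..N}. y \<in> Ipiece x n") (auto simp: Sop_at Sop_out algebra_simps)

lemma Top_eq: "Top x N \<alpha> f b g y = f y + Sop (\<lambda>t. g t - b t) y"
  by (simp add: Top_def Sop_def)

lemma Linv_in_iff: "n \<in> {1..N} \<Longrightarrow> Linv x N n y \<in> {x 0 .. x N} \<longleftrightarrow> y \<in> {x (n-1) .. x n}"
proof -
  assume n: "n \<in> {1..N}"
  have s: "sl n > 0" using sl_pos n .
  have e1: "Linv x N n y = x 0 + sl n * (y - x (n-1))" by (simp add: Linv_eq algebra_simps)
  have e2: "x N = x 0 + sl n * (x n - x (n-1))" using piece_len[OF n] by (simp add: sl_def)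
  have "Linv x N n y \<in> {x 0 .. x N} \<longleftrightarrow> 0 \<le> sl n * (y - x (n-1)) \<and> sl n * (y - x (n-1)) \<le> sl n * (x n - x (n-1))"
    using e1 e2 by auto
  also have "\<dots> \<longleftrightarrow> y \<in> {x (n-1) .. x n}"
    using s by (auto simp: zero_le_mult_iff mult_le_cancel_left_pos)
  finally show ?thesis .
qed

lemma Linv_meas: "n \<in> {1..N} \<Longrightarrow> Linv x N n \<in> lebesgue \<rightarrow>\<^sub>M lebesgue"
proof -
  assume n: "n \<in> {1..N}"
  have "(\<lambda>y. (x 0 - sl n * x (n-1)) + (\<Sum>j\<in>Basis. ((\<lambda>_. sl n) j * (y \<bullet> j)) *\<^sub>R j)) \<in> lebesgue \<rightarrow>\<^sub>M lebesgue"
    by (rule lebesgue_affine_measurable) (use sl_pos[OF n] in auto)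
  moreover have "(\<lambda>y::real. (x 0 - sl n * x (n-1)) + (\<Sum>j\<in>Basis. ((\<lambda>_. sl n) j * (y \<bullet> j)) *\<^sub>R j)) = Linv x N n"
    by (auto simp: Linv_eq fun_eq_iff)
  ultimately show ?thesis by simp
qed

lemma M_eq: "Imeas x N = lebesgue_on {x 0 .. x N}" by (simp add: Imeas_def)

lemma MC:
  fixes \<phi> :: "real \<Rightarrow> 'b::topological_space"
  assumes phi: "\<phi> \<in> borel_measurable (lebesgue_on {x 0 .. x N})" and n: "n \<in> {1..N}"
  shows "(\<lambda>y. if y \<in> Ipiece x n then \<phi> (Linv x N n y) else c) \<in> borel_measurable (lebesgue_on {x 0 .. x N})"
proof -
  have "(\<lambda>t. if t \<in> {x 0 .. x N} then \<phi> t else c) \<in> borel_measurable lebesgue"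
    using phi by (subst (asm) measurable_restrict_space_iff) auto
  then have "(\<lambda>y. (\<lambda>t. if t \<in> {x 0 .. x N} then \<phi> t else c) (Linv x N n y)) \<in> borel_measurable lebesgue"
    using Linv_meas[OF n] by (rule measurable_compose[rotated])
  then have "(\<lambda>y. if y \<in> Ipiece x n then (\<lambda>t. if t \<in> {x 0 .. x N} then \<phi> t else c) (Linv x N n y) else c) \<in> borel_measurable lebesgue"
    by (intro measurable_If_set) (auto simp: Ipiece_def)
  moreover have "(\<lambda>y. if y \<in> Ipiece x n then (\<lambda>t. if t \<in> {x 0 .. x N} then \<phi> t else c) (Linv x N n y) else c)
      = (\<lambda>y. if y \<in> Ipiece x n then \<phi> (Linv x N n y) else c)"
    using Linv_in[OF n] piece_sub[OF n] by (auto simp: fun_eq_iff)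
  ultimately have "(\<lambda>y. if y \<in> Ipiece x n then \<phi> (Linv x N n y) else c) \<in> borel_measurable lebesgue"
    by simp
  then show ?thesis by (rule measurable_restrict_space1)
qed

lemma CV:
  fixes \<phi> :: "real \<Rightarrow> ennreal"
  assumes phi: "\<phi> \<in> borel_measurable (lebesgue_on {x 0 .. x N})" and n: "n \<in> {1..N}"
  shows "(\<integral>\<^sup>+ y. indicator (Ipiece x n) y * \<phi> (Linv x N n y) \<partial>lebesgue_on {x 0 .. x N})
     = ennreal (1 / sl n) * (\<integral>\<^sup>+ t. \<phi> t \<partial>lebesgue_on {x 0 .. x N})"
proof -
  define \<psi> where "\<psi> t = \<phi> t * indicator {x 0 .. x N} t" for t
  have psim: "\<psi> \<in> borel_measurable lebesgue"
    using phi unfolding \<psi>_def by (subst (asm) borel_measurable_restrict_space_iff_ennreal) auto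
  have s: "sl n > 0" using sl_pos n .
  have "(\<integral>\<^sup>+ y. indicator (Ipiece x n) y * \<phi> (Linv x N n y) \<partial>lebesgue_on {x 0 .. x N})
      = (\<integral>\<^sup>+ y. indicator (Ipiece x n) y * \<phi> (Linv x N n y) * indicator {x 0 .. x N} y \<partial>lebesgue)"
    by (subst nn_integral_restrict_space) auto
  also have "\<dots> = (\<integral>\<^sup>+ y. \<psi> (Linv x N n y) \<partial>lebesgue)"
  proof (rule nn_integral_cong_AE)
    have "AE y in lebesgue. y \<noteq> x (n-1)"
      using AE_lborel_singleton[of "x (n-1)"] by (rule AE_completion)
    then show "AE y in lebesgue. indicator (Ipiece x n) y * \<phi> (Linv x N n y) * indicator {x 0 .. x N} y = \<psi> (Linv x N n y)"
    proof eventually_elim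
      case (elim y)
      show ?case
      proof (cases "y \<in> Ipiece x n")
        case True
        have "y \<in> {x 0 .. x N}" using True piece_I[OF n] by blast
        moreover have "Linv x N n y \<in> {x 0 .. x N}" using True Linv_in[OF n] piece_sub[OF n] by blast
        ultimately show ?thesis using True by (simp add: \<psi>_def)
      next
        case False
        have "Linv x N n y \<notin> {x 0 .. x N}"
        proof
          assume "Linv x N n y \<in> {x 0 .. x N}"
          then have "y \<in> {x (n-1) .. x n}" using Linv_in_iff[OF n] by blast
          then have "y \<in> Ipiece x n" using elim by (auto simp: Ipiece_def)
          then show False using False by blast
        qed
        then show ?thesis using False by (simp add: \<psi>_def)
      qed
    qed
  qed
  also have "\<dots> = (\<integral>\<^sup>+ y. \<psi> ((x 0 - sl n * x (n-1)) + sl n * y) \<partial>lebesgue)"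
    by (simp add: Linv_eq)
  also have "\<dots> = ennreal (1 / sl n) * (\<integral>\<^sup>+ t. \<psi> t \<partial>lebesgue)"
  proof -
    have "(\<integral>\<^sup>+ t. \<psi> t \<partial>lebesgue) = ennreal \<bar>sl n\<bar> * (\<integral>\<^sup>+ y. \<psi> ((x 0 - sl n * x (n-1)) + sl n * y) \<partial>lebesgue)"
      using psim s by (intro nn_integral_real_affine_lebesgue) auto
    then have "ennreal (1 / sl n) * (\<integral>\<^sup>+ t. \<psi> t \<partial>lebesgue) = (ennreal (1 / sl n) * ennreal (sl n)) * (\<integral>\<^sup>+ y. \<psi> ((x 0 - sl n * x (n-1)) + sl n * y) \<partial>lebesgue)"
      using s by (simp add: mult.assoc)
    also have "ennreal (1 / sl n) * ennreal (sl n) = 1"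
      using s by (simp add: ennreal_mult''[symmetric])
    finally show ?thesis by simp
  qed
  also have "(\<integral>\<^sup>+ t. \<psi> t \<partial>lebesgue) = (\<integral>\<^sup>+ t. \<phi> t \<partial>lebesgue_on {x 0 .. x N})"
    unfolding \<psi>_def by (subst nn_integral_restrict_space) auto
  finally show ?thesis .
qed


lemma II_sets: "{x 0 .. x N} \<in> sets lebesgue" by simp

lemma M_pos: "emeasure (lebesgue_on {x 0 .. x N}) (space (lebesgue_on {x 0 .. x N})) \<noteq> 0"
proof -
  have "emeasure (lebesgue_on {x 0 .. x N}) {x 0 .. x N} = emeasure lebesgue {x 0 .. x N}"
    by (rule emeasure_restrict_space) auto
  also have "\<dots> = ennreal (x N - x 0)" using x0N by simp
  finally show ?thesis using x0N by simp
qed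

definition Qa :: "real \<Rightarrow> real" where "Qa t = Max ((\<lambda>n. \<bar>\<alpha> n t\<bar>) ` {1..N})"

lemma Qa_le: "Qa t \<le> C \<longleftrightarrow> (\<forall>n\<in>{1..N}. \<bar>\<alpha> n t\<bar> \<le> C)"
  unfolding Qa_def using N2 by (subst Max_le_iff) auto

lemma Qa_nn: "0 \<le> Qa t"
proof -
  have "\<bar>\<alpha> 1 t\<bar> \<le> Qa t" using Qa_le[of t "Qa t"] N2 by auto
  then show ?thesis by linarith
qed

lemma Lam_eq: "Lam x N \<alpha> = Inf {C. AE t in lebesgue_on {x 0 .. x N}. Qa t \<le> C}"
  unfolding Lam_def M_eq Qa_le ..

lemma alpha_meas: "n \<in> {1..N} \<Longrightarrow> \<alpha> n \<in> borel_measurable (lebesgue_on {x 0 .. x N})"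
  using alpha_mem by (auto simp: Lp_mem_def M_eq)

lemma Qa_ex: "\<exists>C. AE t in lebesgue_on {x 0 .. x N}. Qa t \<le> C"
proof -
  have "\<forall>n\<in>{1..N}. \<exists>C. AE t in lebesgue_on {x 0 .. x N}. \<bar>\<alpha> n t\<bar> \<le> C"
    using alpha_mem by (auto simp: Lp_mem_def M_eq)
  then obtain C where C: "\<forall>n\<in>{1..N}. AE t in lebesgue_on {x 0 .. x N}. \<bar>\<alpha> n t\<bar> \<le> C n"
    by metis
  then have "AE t in lebesgue_on {x 0 .. x N}. \<forall>n\<in>{1..N}. \<bar>\<alpha> n t\<bar> \<le> C n"
    by (subst AE_finite_all) auto
  then have "AE t in lebesgue_on {x 0 .. x N}. Qa t \<le> (\<Sum>m\<in>{1..N}. \<bar>C m\<bar>)"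
  proof (rule eventually_mono)
    fix t assume H: "\<forall>n\<in>{1..N}. \<bar>\<alpha> n t\<bar> \<le> C n"
    have "\<bar>\<alpha> n t\<bar> \<le> (\<Sum>m\<in>{1..N}. \<bar>C m\<bar>)" if "n \<in> {1..N}" for n
    proof -
      have "\<bar>C n\<bar> \<le> (\<Sum>m\<in>{1..N}. \<bar>C m\<bar>)" using that by (intro member_le_sum) auto
      then show ?thesis using H that by fastforce
    qed
    then show "Qa t \<le> (\<Sum>m\<in>{1..N}. \<bar>C m\<bar>)" by (simp add: Qa_le)
  qed
  then show ?thesis by blast
qed

lemma Lam_nn: "0 \<le> Lam x N \<alpha>"
  unfolding Lam_eq by (rule AE_Inf_gen(2)[OF Qa_ex Qa_nn M_pos])

lemma Lam_AE: "AE t in lebesgue_on {x 0 .. x N}. \<forall>n\<in>{1..N}. \<bar>\<alpha> n t\<bar> \<le> Lam x N \<alpha>"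
proof -
  have "AE t in lebesgue_on {x 0 .. x N}. Qa t \<le> Lam x N \<alpha>"
    using AE_Inf_gen(1)[OF Qa_ex Qa_nn M_pos] unfolding Lam_eq[symmetric] .
  then show ?thesis by (rule eventually_mono) (simp add: Qa_le)
qed

lemma MCe:
  fixes \<phi> :: "real \<Rightarrow> ennreal"
  assumes phi: "\<phi> \<in> borel_measurable (lebesgue_on {x 0 .. x N})" and n: "n \<in> {1..N}"
  shows "(\<lambda>y. indicator (Ipiece x n) y * \<phi> (Linv x N n y)) \<in> borel_measurable (lebesgue_on {x 0 .. x N})"
proof -
  have "(\<lambda>y. if y \<in> Ipiece x n then \<phi> (Linv x N n y) else 0) \<in> borel_measurable (lebesgue_on {x 0 .. x N})"
    by (rule MC[OF phi n])
  moreover have "(\<lambda>y. if y \<in> Ipiece x n then \<phi> (Linv x N n y) else 0) = (\<lambda>y. indicator (Ipiece x n) y * \<phi> (Linv x N n y))"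
    by (auto simp: fun_eq_iff indicator_def)
  ultimately show ?thesis by simp
qed

lemma AE_trans:
  assumes "AE t in lebesgue_on {x 0 .. x N}. P t"
  shows "AE y in lebesgue_on {x 0 .. x N}. \<forall>n\<in>{1..N}. y \<in> Ipiece x n \<longrightarrow> P (Linv x N n y)"
proof (subst AE_finite_all, simp, intro ballI)
  fix n assume n: "n \<in> {1..N}"
  from assms obtain Z where Z: "{t \<in> space (lebesgue_on {x 0 .. x N}). \<not> P t} \<subseteq> Z"
    "emeasure (lebesgue_on {x 0 .. x N}) Z = 0" "Z \<in> sets (lebesgue_on {x 0 .. x N})"
    by (rule AE_E)
  have im: "indicator Z \<in> borel_measurable (lebesgue_on {x 0 .. x N})"
    using Z(3) by simp
  have "(\<integral>\<^sup>+ y. indicator (Ipiece x n) y * indicator Z (Linv x N n y) \<partial>lebesgue_on {x 0 .. x N})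
     = ennreal (1 / sl n) * (\<integral>\<^sup>+ t. indicator Z t \<partial>lebesgue_on {x 0 .. x N})"
    by (rule CV[OF im n])
  also have "\<dots> = 0" using Z(2,3) by simp
  finally have "AE y in lebesgue_on {x 0 .. x N}. indicator (Ipiece x n) y * (indicator Z (Linv x N n y) :: ennreal) = 0"
    using MCe[OF im n] by (subst (asm) nn_integral_0_iff_AE) auto
  then show "AE y in lebesgue_on {x 0 .. x N}. y \<in> Ipiece x n \<longrightarrow> P (Linv x N n y)"
  proof (rule eventually_mono)
    fix y assume H: "indicator (Ipiece x n) y * (indicator Z (Linv x N n y) :: ennreal) = 0"
    show "y \<in> Ipiece x n \<longrightarrow> P (Linv x N n y)"
    proof
      assume y: "y \<in> Ipiece x n"
      then have "Linv x N n y \<notin> Z" using H by (auto simp: indicator_def split: if_splits)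
      moreover have "Linv x N n y \<in> {x 0 .. x N}" using y Linv_in[OF n] piece_sub[OF n] by blast
      ultimately show "P (Linv x N n y)" using Z(1) by auto
    qed
  qed
qed

lemma Sop_meas: "u \<in> borel_measurable (lebesgue_on {x 0 .. x N}) \<Longrightarrow> Sop u \<in> borel_measurable (lebesgue_on {x 0 .. x N})"
proof -
  assume u: "u \<in> borel_measurable (lebesgue_on {x 0 .. x N})"
  have "(\<lambda>y. if y \<in> Ipiece x n then (\<lambda>t. \<alpha> n t * u t) (Linv x N n y) else 0) \<in> borel_measurable (lebesgue_on {x 0 .. x N})"
    if n: "n \<in> {1..N}" for n
    by (rule MC[OF _ n]) (use alpha_meas[OF n] u in measurable)
  then have "(\<lambda>y. \<Sum>n\<in>{1..N}. if y \<in> Ipiece x n then (\<lambda>t. \<alpha> n t * u t) (Linv x N n y) else 0) \<in> borel_measurable (lebesgue_on {x 0 .. x N})"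
    by (intro borel_measurable_sum) auto
  then show ?thesis unfolding Sop_def[abs_def] by simp
qed

lemma sum_sl: "(\<Sum>n\<in>{1..N}. 1 / sl n) = 1"
proof -
  have "(\<Sum>n\<in>{1..N}. 1 / sl n) = (\<Sum>n\<in>{1..N}. (x n - x (n-1))) / (x N - x 0)"
    unfolding sum_divide_distrib by (intro sum.cong) (auto simp: sl_def)
  also have "\<dots> = 1" using x0N telescope_real[of x N] by simp
  finally show ?thesis .
qed

lemma Sop_pow_eq:
  assumes q: "q > 0"
  shows "ennreal (\<bar>Sop u y\<bar> powr q) = (\<Sum>n\<in>{1..N}. indicator (Ipiece x n) y *
     (\<lambda>t. ennreal (\<bar>\<alpha> n t\<bar> powr q * \<bar>u t\<bar> powr q)) (Linv x N n y))"
proof (cases "\<exists>n\<in>{1..N}. y \<in> Ipiece x n")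
  case True
  then obtain n where n: "n \<in> {1..N}" "y \<in> Ipiece x n" by blast
  have "(\<Sum>n\<in>{1..N}. indicator (Ipiece x n) y * (\<lambda>t. ennreal (\<bar>\<alpha> n t\<bar> powr q * \<bar>u t\<bar> powr q)) (Linv x N n y))
     = indicator (Ipiece x n) y * (\<lambda>t. ennreal (\<bar>\<alpha> n t\<bar> powr q * \<bar>u t\<bar> powr q)) (Linv x N n y)"
    apply (subst sum.remove[of _ n], simp, use n in simp)
    apply (subst sum.neutral)
    using piece_disj n by auto
  also have "\<dots> = ennreal (\<bar>Sop u y\<bar> powr q)"
    using n by (simp add: Sop_at abs_mult powr_mult)
  finally show ?thesis by simp
next
  case False
  then show ?thesis using q by (simp add: Sop_out)
qed

lemma S_energy:
  assumes u: "u \<in> borel_measurable (lebesgue_on {x 0 .. x N})" and q: "q > 0"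
  shows "(\<integral>\<^sup>+ y. ennreal (\<bar>Sop u y\<bar> powr q) \<partial>lebesgue_on {x 0 .. x N})
    \<le> ennreal (Lam x N \<alpha> powr q) * (\<integral>\<^sup>+ t. ennreal (\<bar>u t\<bar> powr q) \<partial>lebesgue_on {x 0 .. x N})"
proof -
  let ?M = "lebesgue_on {x 0 .. x N}"
  let ?E = "\<integral>\<^sup>+ t. ennreal (\<bar>u t\<bar> powr q) \<partial>?M"
  have pm: "(\<lambda>t. ennreal (\<bar>\<alpha> n t\<bar> powr q * \<bar>u t\<bar> powr q)) \<in> borel_measurable ?M" if "n \<in> {1..N}" for n
    using alpha_meas[OF that] u by measurable
  have "(\<integral>\<^sup>+ y. ennreal (\<bar>Sop u y\<bar> powr q) \<partial>?M) = (\<integral>\<^sup>+ y. (\<Sum>n\<in>{1..N}. indicator (Ipiece x n) y *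
     (\<lambda>t. ennreal (\<bar>\<alpha> n t\<bar> powr q * \<bar>u t\<bar> powr q)) (Linv x N n y)) \<partial>?M)"
    by (simp add: Sop_pow_eq[OF q])
  also have "\<dots> = (\<Sum>n\<in>{1..N}. (\<integral>\<^sup>+ y. indicator (Ipiece x n) y *
     (\<lambda>t. ennreal (\<bar>\<alpha> n t\<bar> powr q * \<bar>u t\<bar> powr q)) (Linv x N n y) \<partial>?M))"
    by (rule nn_integral_sum) (use MCe[OF pm] in auto)
  also have "\<dots> = (\<Sum>n\<in>{1..N}. ennreal (1 / sl n) * (\<integral>\<^sup>+ t. ennreal (\<bar>\<alpha> n t\<bar> powr q * \<bar>u t\<bar> powr q) \<partial>?M))"
    by (intro sum.cong refl CV pm) auto
  also have "\<dots> \<le> (\<Sum>n\<in>{1..N}. ennreal (1 / sl n) * (ennreal (Lam x N \<alpha> powr q) * ?E))"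
  proof (intro sum_mono mult_left_mono)
    fix n assume n: "n \<in> {1..N}"
    have "(\<integral>\<^sup>+ t. ennreal (\<bar>\<alpha> n t\<bar> powr q * \<bar>u t\<bar> powr q) \<partial>?M) \<le> (\<integral>\<^sup>+ t. ennreal (Lam x N \<alpha> powr q) * ennreal (\<bar>u t\<bar> powr q) \<partial>?M)"
    proof (rule nn_integral_mono_AE)
      show "AE t in ?M. ennreal (\<bar>\<alpha> n t\<bar> powr q * \<bar>u t\<bar> powr q) \<le> ennreal (Lam x N \<alpha> powr q) * ennreal (\<bar>u t\<bar> powr q)"
        using Lam_AE
      proof (rule eventually_mono)
        fix t assume "\<forall>n\<in>{1..N}. \<bar>\<alpha> n t\<bar> \<le> Lam x N \<alpha>"
        then have "\<bar>\<alpha> n t\<bar> powr q \<le> Lam x N \<alpha> powr q" using n q by (intro powr_mono2) auto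
        then have "\<bar>\<alpha> n t\<bar> powr q * \<bar>u t\<bar> powr q \<le> Lam x N \<alpha> powr q * \<bar>u t\<bar> powr q"
          by (intro mult_right_mono) auto
        then show "ennreal (\<bar>\<alpha> n t\<bar> powr q * \<bar>u t\<bar> powr q) \<le> ennreal (Lam x N \<alpha> powr q) * ennreal (\<bar>u t\<bar> powr q)"
          by (simp add: ennreal_mult''[symmetric] ennreal_leI)
      qed
    qed
    also have "\<dots> = ennreal (Lam x N \<alpha> powr q) * ?E"
      by (rule nn_integral_cmult) (use u in measurable)
    finally show "(\<integral>\<^sup>+ t. ennreal (\<bar>\<alpha> n t\<bar> powr q * \<bar>u t\<bar> powr q) \<partial>?M) \<le> ennreal (Lam x N \<alpha> powr q) * ?E" .
  qed auto
  also have "\<dots> = ennreal (\<Sum>n\<in>{1..N}. 1 / sl n) * (ennreal (Lam x N \<alpha> powr q) * ?E)"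
    by (subst sum_ennreal[symmetric]) (auto simp: sum_distrib_right sl_pos less_imp_le)
  also have "\<dots> = ennreal (Lam x N \<alpha> powr q) * ?E" by (subst sum_sl) simp
  finally show ?thesis .
qed

end


context fcs begin

abbreviation MM where "MM \<equiv> lebesgue_on {x 0 .. x N}"

lemma S_Lq:
  assumes q: "0 < q" and u: "Lq MM q u"
  shows "Lq MM q (Sop u)" and "nq MM q (Sop u) \<le> Lam x N \<alpha> powr q * nq MM q u"
proof -
  have um: "u \<in> borel_measurable MM" using u by (simp add: Lq_def)
  have sm: "Sop u \<in> borel_measurable MM" by (rule Sop_meas[OF um])
  have iu: "integrable MM (\<lambda>t. \<bar>u t\<bar> powr q)" using u by (simp add: Lq_def)
  have Eu: "(\<integral>\<^sup>+ t. ennreal (\<bar>u t\<bar> powr q) \<partial>MM) = ennreal (nq MM q u)"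
    unfolding nq_def by (rule nn_integral_eq_integral[OF iu]) simp
  have ES: "(\<integral>\<^sup>+ y. ennreal (\<bar>Sop u y\<bar> powr q) \<partial>MM) \<le> ennreal (Lam x N \<alpha> powr q * nq MM q u)"
    using S_energy[OF um q] unfolding Eu by (simp add: ennreal_mult nq_nn)
  have iS: "integrable MM (\<lambda>y. \<bar>Sop u y\<bar> powr q)"
  proof (subst integrable_iff_bounded, intro conjI)
    show "(\<lambda>y. \<bar>Sop u y\<bar> powr q) \<in> borel_measurable MM" using sm by measurable
    have "(\<integral>\<^sup>+ y. ennreal (norm (\<bar>Sop u y\<bar> powr q)) \<partial>MM) = (\<integral>\<^sup>+ y. ennreal (\<bar>Sop u y\<bar> powr q) \<partial>MM)"
      by simp
    also have "\<dots> < \<infinity>" using ES by (simp add: le_less_trans)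
    finally show "(\<integral>\<^sup>+ y. ennreal (norm (\<bar>Sop u y\<bar> powr q)) \<partial>MM) < \<infinity>" .
  qed
  show "Lq MM q (Sop u)" using sm iS by (simp add: Lq_def)
  have "ennreal (nq MM q (Sop u)) = (\<integral>\<^sup>+ y. ennreal (\<bar>Sop u y\<bar> powr q) \<partial>MM)"
    unfolding nq_def by (rule nn_integral_eq_integral[OF iS, symmetric]) simp
  with ES have "ennreal (nq MM q (Sop u)) \<le> ennreal (Lam x N \<alpha> powr q * nq MM q u)" by simp
  then show "nq MM q (Sop u) \<le> Lam x N \<alpha> powr q * nq MM q u"
    by (subst (asm) ennreal_le_iff) (auto simp: nq_nn)
qed

lemma S_Linf:
  assumes u: "Linf MM u"
  shows "Linf MM (Sop u)" and "ninf MM (Sop u) \<le> Lam x N \<alpha> * ninf MM u"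
proof -
  have "AE t in MM. \<bar>u t\<bar> \<le> ninf MM u \<and> (\<forall>n\<in>{1..N}. \<bar>\<alpha> n t\<bar> \<le> Lam x N \<alpha>)"
    using ninf_AE[OF u M_pos] Lam_AE by eventually_elim auto
  from AE_trans[OF this] have AEb: "AE y in MM. \<bar>Sop u y\<bar> \<le> Lam x N \<alpha> * ninf MM u"
  proof (rule eventually_mono)
    fix y assume H: "\<forall>n\<in>{1..N}. y \<in> Ipiece x n \<longrightarrow> (\<bar>u (Linv x N n y)\<bar> \<le> ninf MM u \<and>
       (\<forall>m\<in>{1..N}. \<bar>\<alpha> m (Linv x N n y)\<bar> \<le> Lam x N \<alpha>))"
    show "\<bar>Sop u y\<bar> \<le> Lam x N \<alpha> * ninf MM u"
    proof (cases "\<exists>n\<in>{1..N}. y \<in> Ipiece x n")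
      case True
      then obtain n where n: "n \<in> {1..N}" "y \<in> Ipiece x n" by blast
      have "\<bar>Sop u y\<bar> = \<bar>\<alpha> n (Linv x N n y)\<bar> * \<bar>u (Linv x N n y)\<bar>"
        by (simp add: Sop_at[OF n] abs_mult)
      also have "\<dots> \<le> Lam x N \<alpha> * ninf MM u"
        using H n Lam_nn by (intro mult_mono) auto
      finally show ?thesis .
    next
      case False
      then have "Sop u y = 0" by (intro Sop_out) auto
      then show ?thesis using Lam_nn ninf_nn[OF u M_pos] by simp
    qed
  qed
  show "Linf MM (Sop u)" using Sop_meas AEb u by (auto simp: Linf_def)
  show "ninf MM (Sop u) \<le> Lam x N \<alpha> * ninf MM u" by (rule ninf_le[OF AEb M_pos])
qed

definition Dk :: "(real \<Rightarrow> real) \<Rightarrow> nat \<Rightarrow> real \<Rightarrow> real" where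
  "Dk h k = (Sop ^^ k) h"

definition Gm :: "(real \<Rightarrow> real) \<Rightarrow> nat \<Rightarrow> real \<Rightarrow> real" where
  "Gm h m y = (\<Sum>k<m. Dk h k y)"

definition gl :: "(real \<Rightarrow> real) \<Rightarrow> real \<Rightarrow> real" where
  "gl h y = lim (\<lambda>m. Gm h m y)"

lemma Dk_0: "Dk h 0 = h" by (simp add: Dk_def)
lemma Dk_Suc: "Dk h (Suc k) = Sop (Dk h k)" by (simp add: Dk_def)

lemma Sop_sum: "Sop (\<lambda>t. \<Sum>k<(m::nat). F k t) y = (\<Sum>k<m. Sop (F k) y)"
proof (induction m)
  case 0 then show ?case using Sop_zero by simp
next
  case (Suc m)
  have "Sop (\<lambda>t. \<Sum>k<Suc m. F k t) y = Sop (\<lambda>t. (\<Sum>k<m. F k t) + F m t) y" by simp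
  also have "\<dots> = Sop (\<lambda>t. \<Sum>k<m. F k t) y + Sop (\<lambda>t. F m t) y" by (rule Sop_add)
  finally show ?case using Suc by simp
qed

lemma Gm_Suc: "Gm h (Suc m) y = h y + Sop (Gm h m) y"
proof -
  have "Gm h (Suc m) y = Dk h 0 y + (\<Sum>k<m. Dk h (Suc k) y)"
    unfolding Gm_def by (subst sum.lessThan_Suc_shift) simp
  also have "\<dots> = h y + (\<Sum>k<m. Sop (Dk h k) y)" by (simp add: Dk_0 Dk_Suc)
  also have "(\<Sum>k<m. Sop (Dk h k) y) = Sop (Gm h m) y"
    unfolding Gm_def[abs_def] by (rule Sop_sum[symmetric])
  finally show ?thesis .
qed

lemma Dk_meas: "h \<in> borel_measurable MM \<Longrightarrow> Dk h k \<in> borel_measurable MM"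
  by (induction k) (simp_all add: Dk_0 Dk_Suc Sop_meas)

lemma gl_meas: "h \<in> borel_measurable MM \<Longrightarrow> gl h \<in> borel_measurable MM"
proof -
  assume h: "h \<in> borel_measurable MM"
  have "(\<lambda>y. Gm h m y) \<in> borel_measurable MM" for m
    unfolding Gm_def using Dk_meas[OF h] by (intro borel_measurable_sum) auto
  then show ?thesis unfolding gl_def[abs_def] by (rule borel_measurable_lim_metric)
qed

lemma gl_conv: "summable (\<lambda>k. Dk h k z) \<Longrightarrow> (\<lambda>m. Gm h m z) \<longlonglongrightarrow> gl h z"
proof -
  assume "summable (\<lambda>k. Dk h k z)"
  then have "(\<lambda>m. Gm h m z) \<longlonglongrightarrow> (\<Sum>k. Dk h k z)" unfolding Gm_def by (rule summable_LIMSEQ)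
  then show ?thesis unfolding gl_def by (simp add: limI)
qed

lemma gl_suminf: "summable (\<lambda>k. Dk h k z) \<Longrightarrow> gl h z = (\<Sum>k. Dk h k z)"
  using gl_conv summable_LIMSEQ[of "\<lambda>k. Dk h k z"] LIMSEQ_unique unfolding Gm_def by blast

lemma fp_from_summable:
  assumes S: "AE y in MM. summable (\<lambda>k. Dk h k y)"
  shows "AE y in MM. gl h y = h y + Sop (gl h) y"
proof -
  have "AE y in MM. summable (\<lambda>k. Dk h k y) \<and> (\<forall>n\<in>{1..N}. y \<in> Ipiece x n \<longrightarrow> summable (\<lambda>k. Dk h k (Linv x N n y)))"
    using S AE_trans[OF S] by eventually_elim auto
  then show ?thesis
  proof (rule eventually_mono)
    fix y assume H: "summable (\<lambda>k. Dk h k y) \<and> (\<forall>n\<in>{1..N}. y \<in> Ipiece x n \<longrightarrow> summable (\<lambda>k. Dk h k (Linv x N n y)))"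
    have c1: "(\<lambda>m. Gm h m y) \<longlonglongrightarrow> gl h y" using H gl_conv by blast
    have c2: "(\<lambda>m. Sop (Gm h m) y) \<longlonglongrightarrow> Sop (gl h) y"
    proof (cases "\<exists>n\<in>{1..N}. y \<in> Ipiece x n")
      case True
      then obtain n where n: "n \<in> {1..N}" "y \<in> Ipiece x n" by blast
      have "(\<lambda>m. Gm h m (Linv x N n y)) \<longlonglongrightarrow> gl h (Linv x N n y)" using H n gl_conv by blast
      then have "(\<lambda>m. \<alpha> n (Linv x N n y) * Gm h m (Linv x N n y)) \<longlonglongrightarrow> \<alpha> n (Linv x N n y) * gl h (Linv x N n y)"
        by (intro tendsto_mult tendsto_const)
      then show ?thesis by (simp add: Sop_at[OF n])
    next
      case False
      then show ?thesis by (simp add: Sop_out)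
    qed
    have "(\<lambda>m. Gm h (Suc m) y) \<longlonglongrightarrow> h y + Sop (gl h) y"
      unfolding Gm_Suc by (intro tendsto_add tendsto_const c2)
    moreover have "(\<lambda>m. Gm h (Suc m) y) \<longlonglongrightarrow> gl h y" using c1 by (rule LIMSEQ_Suc)
    ultimately show "gl h y = h y + Sop (gl h) y" using LIMSEQ_unique by blast
  qed
qed

lemma fp_Top:
  assumes "AE y in MM. gl h y = h y + Sop (gl h) y" and "h = (\<lambda>y. f y - Sop b y)"
  shows "AE y in MM. Top x N \<alpha> f b (gl h) y = gl h y"
  using assms(1) by (rule eventually_mono) (simp add: Top_eq Sop_diff assms(2))


lemma pow_powr: "0 < (\<rho>::real) \<Longrightarrow> (\<rho> ^ k) powr s = (\<rho> powr s) ^ k"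
proof -
  assume r: "0 < \<rho>"
  have "(\<rho> ^ k) powr s = (\<rho> powr real k) powr s" using r by (simp add: powr_realpow)
  also have "\<dots> = (\<rho> powr s) powr real k" by (simp add: powr_powr mult.commute)
  also have "\<dots> = (\<rho> powr s) ^ k" using r by (simp add: powr_realpow)
  finally show ?thesis .
qed

lemma r_lt: "0 < q \<Longrightarrow> Lam x N \<alpha> powr q < 1"
proof -
  assume q: "0 < q"
  have "Lam x N \<alpha> powr q < 1 powr q" using q Lam_nn Lam_lt by (intro powr_less_mono2) auto
  then show ?thesis by simp
qed

lemma Dk_Lq: assumes q: "0 < q" and h: "Lq MM q h"
  shows "Lq MM q (Dk h k) \<and> nq MM q (Dk h k) \<le> (Lam x N \<alpha> powr q) ^ k * nq MM q h"
proof (induction k)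
  case 0 then show ?case using h by (simp add: Dk_0)
next
  case (Suc k)
  have L: "Lq MM q (Dk h (Suc k))" unfolding Dk_Suc using S_Lq(1)[OF q] Suc by blast
  have "nq MM q (Dk h (Suc k)) \<le> Lam x N \<alpha> powr q * nq MM q (Dk h k)"
    unfolding Dk_Suc using S_Lq(2)[OF q] Suc by blast
  also have "\<dots> \<le> Lam x N \<alpha> powr q * ((Lam x N \<alpha> powr q) ^ k * nq MM q h)"
    using Suc by (intro mult_left_mono) auto
  finally show ?case using L by (simp add: mult.assoc)
qed

lemma Dk_Linf: assumes h: "Linf MM h"
  shows "Linf MM (Dk h k) \<and> ninf MM (Dk h k) \<le> Lam x N \<alpha> ^ k * ninf MM h"
proof (induction k)
  case 0 then show ?case using h by (simp add: Dk_0)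
next
  case (Suc k)
  have L: "Linf MM (Dk h (Suc k))" unfolding Dk_Suc using S_Linf(1) Suc by blast
  have "ninf MM (Dk h (Suc k)) \<le> Lam x N \<alpha> * ninf MM (Dk h k)"
    unfolding Dk_Suc using S_Linf(2) Suc by blast
  also have "\<dots> \<le> Lam x N \<alpha> * (Lam x N \<alpha> ^ k * ninf MM h)"
    using Suc Lam_nn by (intro mult_left_mono) auto
  finally show ?case using L by (simp add: mult.assoc)
qed

lemma inf_exist:
  assumes h: "Linf MM h"
  shows "AE y in MM. summable (\<lambda>k. Dk h k y)" and "Linf MM (gl h)"
proof -
  define C where "C = ninf MM h"
  have C: "0 \<le> C" unfolding C_def by (rule ninf_nn[OF h M_pos])
  have L: "0 \<le> Lam x N \<alpha>" "Lam x N \<alpha> < 1" using Lam_nn Lam_lt by auto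
  have "AE y in MM. \<bar>Dk h k y\<bar> \<le> Lam x N \<alpha> ^ k * C" for k
  proof -
    have "AE y in MM. \<bar>Dk h k y\<bar> \<le> ninf MM (Dk h k)" using Dk_Linf[OF h, of k] ninf_AE M_pos by blast
    then show ?thesis using Dk_Linf[OF h, of k] unfolding C_def by (auto elim!: eventually_mono)
  qed
  then have A: "AE y in MM. \<forall>k. \<bar>Dk h k y\<bar> \<le> Lam x N \<alpha> ^ k * C" by (simp add: AE_all_countable)
  have sg: "summable (\<lambda>k. C * Lam x N \<alpha> ^ k)" using L by (intro summable_mult summable_geometric) auto
  show "AE y in MM. summable (\<lambda>k. Dk h k y)"
    using A by (rule eventually_mono) (rule summable_comparison_test'[OF sg], auto simp: mult.commute)
  have "AE y in MM. \<bar>gl h y\<bar> \<le> C / (1 - Lam x N \<alpha>)"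
    using A
  proof (rule eventually_mono)
    fix y assume H: "\<forall>k. \<bar>Dk h k y\<bar> \<le> Lam x N \<alpha> ^ k * C"
    have s: "summable (\<lambda>k. Dk h k y)" by (rule summable_comparison_test'[OF sg]) (use H in \<open>auto simp: mult.commute\<close>)
    have "\<bar>gl h y\<bar> = norm (\<Sum>k. Dk h k y)" using gl_suminf[OF s] by simp
    also have "\<dots> \<le> (\<Sum>k. C * Lam x N \<alpha> ^ k)" by (rule norm_suminf_le[OF _ sg]) (use H in \<open>auto simp: mult.commute\<close>)
    also have "\<dots> = C * (1 / (1 - Lam x N \<alpha>))" using L by (simp add: suminf_mult summable_geometric suminf_geometric)
    finally show "\<bar>gl h y\<bar> \<le> C / (1 - Lam x N \<alpha>)" by simp
  qed
  moreover have "gl h \<in> borel_measurable MM" using h by (intro gl_meas) (simp add: Linf_def)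
  ultimately show "Linf MM (gl h)" unfolding Linf_def by blast
qed

lemma fin_exist:
  assumes q: "0 < q" and h: "Lq MM q h"
  shows "AE y in MM. summable (\<lambda>k. Dk h k y)" and "Lq MM q (gl h)"
proof -
  define r where "r = Lam x N \<alpha> powr q"
  have r: "0 \<le> r" "r < 1" using r_lt[OF q] by (auto simp: r_def)
  define \<rho> where "\<rho> = (1 + r) / 2"
  have \<rho>: "0 < \<rho>" "\<rho> < 1" "r < \<rho>" using r by (auto simp: \<rho>_def)
  have rr: "0 \<le> r / \<rho>" "r / \<rho> < 1" using r \<rho> by auto
  have hm: "h \<in> borel_measurable MM" using h by (simp add: Lq_def)
  define a where "a k y = \<bar>Dk h k y\<bar> powr q / \<rho> ^ k" for k y
  have a_nn: "0 \<le> a k y" for k y using \<rho> by (simp add: a_def)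
  have am: "(\<lambda>y. ennreal (a k y)) \<in> borel_measurable MM" for k
    unfolding a_def using Dk_meas[OF hm, of k] by measurable
  have ia: "(\<integral>\<^sup>+ y. ennreal (a k y) \<partial>MM) = ennreal (nq MM q (Dk h k) / \<rho> ^ k)" for k
  proof -
    have i: "integrable MM (\<lambda>y. \<bar>Dk h k y\<bar> powr q)" using Dk_Lq[OF q h, of k] by (simp add: Lq_def)
    have "(\<integral>\<^sup>+ y. ennreal (a k y) \<partial>MM) = ennreal (\<integral>y. a k y \<partial>MM)"
      unfolding a_def by (rule nn_integral_eq_integral) (use i \<rho> in \<open>auto intro!: AE_I2\<close>)
    also have "(\<integral>y. a k y \<partial>MM) = nq MM q (Dk h k) / \<rho> ^ k" unfolding a_def nq_def by simp
    finally show ?thesis .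
  qed
  define W where "W y = (\<Sum>k. ennreal (a k y))" for y
  have Wm: "W \<in> borel_measurable MM" unfolding W_def using am by measurable
  have "(\<integral>\<^sup>+ y. W y \<partial>MM) = (\<Sum>k. (\<integral>\<^sup>+ y. ennreal (a k y) \<partial>MM))"
    unfolding W_def by (rule nn_integral_suminf[OF am])
  also have "\<dots> \<le> (\<Sum>k. ennreal ((r / \<rho>) ^ k * nq MM q h))"
  proof (rule suminf_le[OF _ summableI summableI])
    fix k
    have "nq MM q (Dk h k) \<le> r ^ k * nq MM q h" using Dk_Lq[OF q h, of k] by (simp add: r_def)
    then have "nq MM q (Dk h k) / \<rho> ^ k \<le> (r / \<rho>) ^ k * nq MM q h"
      using \<rho> by (simp add: power_divide divide_right_mono)
    then show "(\<integral>\<^sup>+ y. ennreal (a k y) \<partial>MM) \<le> ennreal ((r / \<rho>) ^ k * nq MM q h)"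
      unfolding ia by (rule ennreal_leI)
  qed
  also have "\<dots> = ennreal (\<Sum>k. (r / \<rho>) ^ k * nq MM q h)"
    using rr by (intro suminf_ennreal2 summable_mult2 summable_geometric) (auto simp: nq_nn)
  finally have Wfin: "(\<integral>\<^sup>+ y. W y \<partial>MM) \<noteq> \<infinity>" by (auto simp: top_unique)
  have AW: "AE y in MM. W y \<noteq> \<infinity>" by (rule nn_integral_noteq_infinite[OF Wm Wfin])
  define \<sigma> where "\<sigma> = \<rho> powr (1/q)"
  have \<sigma>: "0 < \<sigma>" "\<sigma> < 1"
  proof -
    show "0 < \<sigma>" using \<rho> by (simp add: \<sigma>_def)
    have "\<rho> powr (1/q) < 1 powr (1/q)" using \<rho> q by (intro powr_less_mono2) auto
    then show "\<sigma> < 1" by (simp add: \<sigma>_def)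
  qed
  define K where "K = 1 / (1 - \<sigma>) powr q"
  have K: "0 \<le> K" by (simp add: K_def)
  have key: "summable (\<lambda>k. Dk h k y) \<and> ennreal (\<bar>gl h y\<bar> powr q) \<le> ennreal K * W y" if Wy: "W y \<noteq> \<infinity>" for y
  proof -
    have sa: "summable (\<lambda>k. a k y)" using Wy a_nn unfolding W_def by (intro summable_suminf_not_top) auto
    define w where "w = (\<Sum>k. a k y)"
    have w: "0 \<le> w" unfolding w_def using sa a_nn by (intro suminf_nonneg) auto
    have Ww: "W y = ennreal w" unfolding W_def w_def using sa a_nn by (intro suminf_ennreal2) auto
    have ak: "a k y \<le> w" for k
    proof -
      have "sum (\<lambda>k. a k y) {k} \<le> w" unfolding w_def by (rule sum_le_suminf[OF sa]) (auto simp: a_nn)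
      then show ?thesis by simp
    qed
    have Db: "\<bar>Dk h k y\<bar> \<le> w powr (1/q) * \<sigma> ^ k" for k
    proof -
      have "\<bar>Dk h k y\<bar> powr q \<le> w * \<rho> ^ k" using ak[of k] \<rho> by (simp add: a_def pos_divide_le_eq)
      then have "(\<bar>Dk h k y\<bar> powr q) powr (1/q) \<le> (w * \<rho> ^ k) powr (1/q)" using q by (intro powr_mono2) auto
      also have "(\<bar>Dk h k y\<bar> powr q) powr (1/q) = \<bar>Dk h k y\<bar>" using q by (simp add: powr_powr)
      also have "(w * \<rho> ^ k) powr (1/q) = w powr (1/q) * \<sigma> ^ k"
        using w \<rho> by (simp add: powr_mult pow_powr \<sigma>_def)
      finally show ?thesis .
    qed
    have sg: "summable (\<lambda>k. w powr (1/q) * \<sigma> ^ k)" using \<sigma> by (intro summable_mult summable_geometric) auto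
    have s: "summable (\<lambda>k. Dk h k y)" by (rule summable_comparison_test'[OF sg]) (use Db in auto)
    have "\<bar>gl h y\<bar> = norm (\<Sum>k. Dk h k y)" using gl_suminf[OF s] by simp
    also have "\<dots> \<le> (\<Sum>k. w powr (1/q) * \<sigma> ^ k)" by (rule norm_suminf_le[OF _ sg]) (use Db in auto)
    also have "\<dots> = w powr (1/q) / (1 - \<sigma>)" using \<sigma> by (simp add: suminf_mult summable_geometric suminf_geometric)
    finally have "\<bar>gl h y\<bar> \<le> w powr (1/q) / (1 - \<sigma>)" .
    then have "\<bar>gl h y\<bar> powr q \<le> (w powr (1/q) / (1 - \<sigma>)) powr q" using q by (intro powr_mono2) auto
    also have "\<dots> = K * w" using q w \<sigma> by (simp add: K_def powr_divide powr_powr)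
    finally have "ennreal (\<bar>gl h y\<bar> powr q) \<le> ennreal (K * w)" by (rule ennreal_leI)
    also have "\<dots> = ennreal K * W y" using K w Ww by (simp add: ennreal_mult)
    finally show ?thesis using s by blast
  qed
  show "AE y in MM. summable (\<lambda>k. Dk h k y)" using AW by (rule eventually_mono) (use key in blast)
  have glm: "gl h \<in> borel_measurable MM" by (rule gl_meas[OF hm])
  have "integrable MM (\<lambda>y. \<bar>gl h y\<bar> powr q)"
  proof (subst integrable_iff_bounded, intro conjI)
    show "(\<lambda>y. \<bar>gl h y\<bar> powr q) \<in> borel_measurable MM" using glm by measurable
    have "(\<integral>\<^sup>+ y. ennreal (norm (\<bar>gl h y\<bar> powr q)) \<partial>MM) \<le> (\<integral>\<^sup>+ y. ennreal K * W y \<partial>MM)"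
      by (rule nn_integral_mono_AE) (use AW key in \<open>auto elim!: eventually_mono\<close>)
    also have "\<dots> = ennreal K * (\<integral>\<^sup>+ y. W y \<partial>MM)" by (rule nn_integral_cmult[OF Wm])
    also have "\<dots> < \<infinity>" using Wfin by (simp add: ennreal_mult_less_top less_top)
    finally show "(\<integral>\<^sup>+ y. ennreal (norm (\<bar>gl h y\<bar> powr q)) \<partial>MM) < \<infinity>" .
  qed
  then show "Lq MM q (gl h)" using glm by (simp add: Lq_def)
qed

lemma exist_fin:
  assumes q: "0 < q" and f: "Lq MM q f" and b: "Lq MM q b"
  shows "\<exists>g. Lq MM q g \<and> (AE y in MM. Top x N \<alpha> f b g y = g y)"
proof -
  define h where "h = (\<lambda>y. f y - Sop b y)"
  have h: "Lq MM q h" unfolding h_def by (rule Lq_diff[OF q f S_Lq(1)[OF q b]])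
  show ?thesis
    using fin_exist(2)[OF q h] fp_Top[OF fp_from_summable[OF fin_exist(1)[OF q h]] h_def] by blast
qed

lemma exist_inf:
  assumes f: "Linf MM f" and b: "Linf MM b"
  shows "\<exists>g. Linf MM g \<and> (AE y in MM. Top x N \<alpha> f b g y = g y)"
proof -
  define h where "h = (\<lambda>y. f y - Sop b y)"
  have h: "Linf MM h" unfolding h_def by (rule Linf_diff[OF f S_Linf(1)[OF b]])
  show ?thesis
    using inf_exist(2)[OF h] fp_Top[OF fp_from_summable[OF inf_exist(1)[OF h]] h_def] by blast
qed


lemma fp_diff1:
  assumes "AE y in MM. Top x N \<alpha> f b g y = g y" "AE y in MM. Top x N \<alpha> f' b g' y = g' y"
  shows "AE y in MM. g y - g' y = (f y - f' y) + Sop (\<lambda>t. g t - g' t) y"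
  using assms
proof eventually_elim
  case (elim y)
  then show ?case using elim unfolding Top_eq Sop_diff by linarith
qed

lemma fp_diff2:
  assumes "AE y in MM. Top x N \<alpha> f b g y = g y" "AE y in MM. Top x N \<alpha> f b' g' y = g' y"
  shows "AE y in MM. g y - g' y = Sop (\<lambda>t. g t - g' t) y + (- Sop (\<lambda>t. b t - b' t) y)"
  using assms
proof eventually_elim
  case (elim y)
  then show ?case using elim unfolding Top_eq Sop_diff by linarith
qed

lemma nq_minus: "nq M q (\<lambda>t. - u t) = nq M q u" by (simp add: nq_def)

lemma nq_S_root: assumes q: "0 < q" and u: "Lq MM q u"
  shows "nq MM q (Sop u) powr (1/q) \<le> Lam x N \<alpha> * nq MM q u powr (1/q)"
proof -
  have "nq MM q (Sop u) powr (1/q) \<le> (Lam x N \<alpha> powr q * nq MM q u) powr (1/q)"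
    using S_Lq(2)[OF q u] q by (intro powr_mono2) (auto simp: nq_nn)
  also have "\<dots> = Lam x N \<alpha> * nq MM q u powr (1/q)"
    using q Lam_nn by (simp add: powr_mult powr_powr nq_nn)
  finally show ?thesis .
qed

lemma ineq1_fin:
  assumes q: "1 \<le> q" and f: "Lq MM q f" and f': "Lq MM q f'" and g: "Lq MM q g" and g': "Lq MM q g'"
    and fg: "AE y in MM. Top x N \<alpha> f b g y = g y" and fg': "AE y in MM. Top x N \<alpha> f' b g' y = g' y"
  shows "nq MM q (\<lambda>t. g t - g' t) powr (1/q) \<le> 1 / (1 - Lam x N \<alpha>) * nq MM q (\<lambda>t. f t - f' t) powr (1/q)"
proof -
  have q0: "0 < q" using q by simp
  have u: "Lq MM q (\<lambda>t. g t - g' t)" by (rule Lq_diff[OF q0 g g'])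
  have v: "Lq MM q (\<lambda>t. f t - f' t)" by (rule Lq_diff[OF q0 f f'])
  have su: "Lq MM q (Sop (\<lambda>t. g t - g' t))" by (rule S_Lq(1)[OF q0 u])
  have "nq MM q (\<lambda>t. g t - g' t) = nq MM q (\<lambda>t. (f t - f' t) + Sop (\<lambda>t. g t - g' t) t)"
    by (rule nq_cong) (use u v su fp_diff1[OF fg fg'] in \<open>auto simp: Lq_def\<close>)
  then have "nq MM q (\<lambda>t. g t - g' t) powr (1/q) \<le> nq MM q (\<lambda>t. f t - f' t) powr (1/q) + nq MM q (Sop (\<lambda>t. g t - g' t)) powr (1/q)"
    using nq_mink[OF q v su] by simp
  also have "\<dots> \<le> nq MM q (\<lambda>t. f t - f' t) powr (1/q) + Lam x N \<alpha> * nq MM q (\<lambda>t. g t - g' t) powr (1/q)"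
    using nq_S_root[OF q0 u] by simp
  finally show ?thesis using Lam_lt by (rule alg1)
qed

lemma ineq2_fin:
  assumes q: "1 \<le> q" and b: "Lq MM q b" and b': "Lq MM q b'" and g: "Lq MM q g" and g': "Lq MM q g'"
    and fg: "AE y in MM. Top x N \<alpha> f b g y = g y" and fg': "AE y in MM. Top x N \<alpha> f b' g' y = g' y"
  shows "nq MM q (\<lambda>t. g t - g' t) powr (1/q) \<le> Lam x N \<alpha> / (1 - Lam x N \<alpha>) * nq MM q (\<lambda>t. b t - b' t) powr (1/q)"
proof -
  have q0: "0 < q" using q by simp
  have u: "Lq MM q (\<lambda>t. g t - g' t)" by (rule Lq_diff[OF q0 g g'])
  have w: "Lq MM q (\<lambda>t. b t - b' t)" by (rule Lq_diff[OF q0 b b'])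
  have su: "Lq MM q (Sop (\<lambda>t. g t - g' t))" by (rule S_Lq(1)[OF q0 u])
  have sw: "Lq MM q (\<lambda>t. - Sop (\<lambda>t. b t - b' t) t)" by (rule Lq_minus[OF S_Lq(1)[OF q0 w]])
  have "nq MM q (\<lambda>t. g t - g' t) = nq MM q (\<lambda>t. Sop (\<lambda>t. g t - g' t) t + (- Sop (\<lambda>t. b t - b' t) t))"
    by (rule nq_cong) (use u sw su fp_diff2[OF fg fg'] in \<open>auto simp: Lq_def\<close>)
  then have "nq MM q (\<lambda>t. g t - g' t) powr (1/q) \<le> nq MM q (Sop (\<lambda>t. g t - g' t)) powr (1/q) + nq MM q (\<lambda>t. - Sop (\<lambda>t. b t - b' t) t) powr (1/q)"
    using nq_mink[OF q su sw] by simp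
  also have "\<dots> \<le> Lam x N \<alpha> * nq MM q (\<lambda>t. g t - g' t) powr (1/q) + Lam x N \<alpha> * nq MM q (\<lambda>t. b t - b' t) powr (1/q)"
    using nq_S_root[OF q0 u] nq_S_root[OF q0 w] by (simp add: nq_minus)
  finally show ?thesis using Lam_lt by (rule alg2)
qed

lemma ineq1_sub:
  assumes q: "0 < q" "q < 1" and f: "Lq MM q f" and f': "Lq MM q f'" and g: "Lq MM q g" and g': "Lq MM q g'"
    and fg: "AE y in MM. Top x N \<alpha> f b g y = g y" and fg': "AE y in MM. Top x N \<alpha> f' b g' y = g' y"
  shows "nq MM q (\<lambda>t. g t - g' t) \<le> 1 / (1 - Lam x N \<alpha> powr q) * nq MM q (\<lambda>t. f t - f' t)"
proof -
  have u: "Lq MM q (\<lambda>t. g t - g' t)" by (rule Lq_diff[OF q(1) g g'])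
  have v: "Lq MM q (\<lambda>t. f t - f' t)" by (rule Lq_diff[OF q(1) f f'])
  have su: "Lq MM q (Sop (\<lambda>t. g t - g' t))" by (rule S_Lq(1)[OF q(1) u])
  have "nq MM q (\<lambda>t. g t - g' t) = nq MM q (\<lambda>t. (f t - f' t) + Sop (\<lambda>t. g t - g' t) t)"
    by (rule nq_cong) (use u v su fp_diff1[OF fg fg'] in \<open>auto simp: Lq_def\<close>)
  also have "\<dots> \<le> nq MM q (\<lambda>t. f t - f' t) + nq MM q (Sop (\<lambda>t. g t - g' t))"
    using nq_sub[OF q(1) _ v su] q by simp
  also have "\<dots> \<le> nq MM q (\<lambda>t. f t - f' t) + Lam x N \<alpha> powr q * nq MM q (\<lambda>t. g t - g' t)"
    using S_Lq(2)[OF q(1) u] by simp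
  finally show ?thesis using r_lt[OF q(1)] by (rule alg1)
qed

lemma ineq2_sub:
  assumes q: "0 < q" "q < 1" and b: "Lq MM q b" and b': "Lq MM q b'" and g: "Lq MM q g" and g': "Lq MM q g'"
    and fg: "AE y in MM. Top x N \<alpha> f b g y = g y" and fg': "AE y in MM. Top x N \<alpha> f b' g' y = g' y"
  shows "nq MM q (\<lambda>t. g t - g' t) \<le> Lam x N \<alpha> powr q / (1 - Lam x N \<alpha> powr q) * nq MM q (\<lambda>t. b t - b' t)"
proof -
  have u: "Lq MM q (\<lambda>t. g t - g' t)" by (rule Lq_diff[OF q(1) g g'])
  have w: "Lq MM q (\<lambda>t. b t - b' t)" by (rule Lq_diff[OF q(1) b b'])
  have su: "Lq MM q (Sop (\<lambda>t. g t - g' t))" by (rule S_Lq(1)[OF q(1) u])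
  have sw: "Lq MM q (\<lambda>t. - Sop (\<lambda>t. b t - b' t) t)" by (rule Lq_minus[OF S_Lq(1)[OF q(1) w]])
  have "nq MM q (\<lambda>t. g t - g' t) = nq MM q (\<lambda>t. Sop (\<lambda>t. g t - g' t) t + (- Sop (\<lambda>t. b t - b' t) t))"
    by (rule nq_cong) (use u sw su fp_diff2[OF fg fg'] in \<open>auto simp: Lq_def\<close>)
  also have "\<dots> \<le> nq MM q (Sop (\<lambda>t. g t - g' t)) + nq MM q (\<lambda>t. - Sop (\<lambda>t. b t - b' t) t)"
    using nq_sub[OF q(1) _ su sw] q by simp
  also have "\<dots> \<le> Lam x N \<alpha> powr q * nq MM q (\<lambda>t. g t - g' t) + Lam x N \<alpha> powr q * nq MM q (\<lambda>t. b t - b' t)"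
    using S_Lq(2)[OF q(1) u] S_Lq(2)[OF q(1) w] by (simp add: nq_minus)
  finally show ?thesis using r_lt[OF q(1)] by (rule alg2)
qed

lemma ineq1_inf:
  assumes f: "Linf MM f" and f': "Linf MM f'" and g: "Linf MM g" and g': "Linf MM g'"
    and fg: "AE y in MM. Top x N \<alpha> f b g y = g y" and fg': "AE y in MM. Top x N \<alpha> f' b g' y = g' y"
  shows "ninf MM (\<lambda>t. g t - g' t) \<le> 1 / (1 - Lam x N \<alpha>) * ninf MM (\<lambda>t. f t - f' t)"
proof -
  have u: "Linf MM (\<lambda>t. g t - g' t)" by (rule Linf_diff[OF g g'])
  have v: "Linf MM (\<lambda>t. f t - f' t)" by (rule Linf_diff[OF f f'])
  have su: "Linf MM (Sop (\<lambda>t. g t - g' t))" by (rule S_Linf(1)[OF u])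
  have "ninf MM (\<lambda>t. g t - g' t) \<le> ninf MM (\<lambda>t. (f t - f' t) + Sop (\<lambda>t. g t - g' t) t)"
    by (rule ninf_cong[OF fp_diff1[OF fg fg'] Linf_add[OF v su] M_pos])
  also have "\<dots> \<le> ninf MM (\<lambda>t. f t - f' t) + ninf MM (Sop (\<lambda>t. g t - g' t))"
    using ninf_tri[OF v su M_pos] by simp
  also have "\<dots> \<le> ninf MM (\<lambda>t. f t - f' t) + Lam x N \<alpha> * ninf MM (\<lambda>t. g t - g' t)"
    using S_Linf(2)[OF u] by simp
  finally show ?thesis using Lam_lt by (rule alg1)
qed

lemma ineq2_inf:
  assumes b: "Linf MM b" and b': "Linf MM b'" and g: "Linf MM g" and g': "Linf MM g'"
    and fg: "AE y in MM. Top x N \<alpha> f b g y = g y" and fg': "AE y in MM. Top x N \<alpha> f b' g' y = g' y"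
  shows "ninf MM (\<lambda>t. g t - g' t) \<le> Lam x N \<alpha> / (1 - Lam x N \<alpha>) * ninf MM (\<lambda>t. b t - b' t)"
proof -
  have u: "Linf MM (\<lambda>t. g t - g' t)" by (rule Linf_diff[OF g g'])
  have w: "Linf MM (\<lambda>t. b t - b' t)" by (rule Linf_diff[OF b b'])
  have su: "Linf MM (Sop (\<lambda>t. g t - g' t))" by (rule S_Linf(1)[OF u])
  have sw: "Linf MM (\<lambda>t. - Sop (\<lambda>t. b t - b' t) t)" by (rule Linf_minus[OF S_Linf(1)[OF w]])
  have "ninf MM (\<lambda>t. g t - g' t) \<le> ninf MM (\<lambda>t. Sop (\<lambda>t. g t - g' t) t + (- Sop (\<lambda>t. b t - b' t) t))"
    by (rule ninf_cong[OF fp_diff2[OF fg fg'] Linf_add[OF su sw] M_pos])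
  also have "\<dots> \<le> ninf MM (Sop (\<lambda>t. g t - g' t)) + ninf MM (\<lambda>t. - Sop (\<lambda>t. b t - b' t) t)"
    using ninf_tri[OF su sw M_pos] by simp
  also have "\<dots> \<le> Lam x N \<alpha> * ninf MM (\<lambda>t. g t - g' t) + Lam x N \<alpha> * ninf MM (\<lambda>t. b t - b' t)"
    using S_Linf(2)[OF u] S_Linf(2)[OF w] by (simp add: ninf_minus)
  finally show ?thesis using Lam_lt by (rule alg2)
qed

lemma Lp_mem_fin: "0 < q \<Longrightarrow> Lp_mem (Imeas x N) (ennreal q) g \<longleftrightarrow> Lq MM q g"
  by (simp add: Lp_mem_def Lq_def M_eq)

lemma Lp_mem_top: "Lp_mem (Imeas x N) top g \<longleftrightarrow> Linf MM g"
  by (simp add: Lp_mem_def Linf_def M_eq)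

lemma Lp_norm_fin: "0 < q \<Longrightarrow> Lp_norm (Imeas x N) (ennreal q) u = nq MM q u powr (1/q)"
  by (simp add: Lp_norm_def nq_def M_eq)

lemma Lp_norm_top: "Lp_norm (Imeas x N) top u = ninf MM u"
  by (simp add: Lp_norm_def ninf_def M_eq)

lemma dp_eq: "d_p (Imeas x N) p g h = nq MM p (\<lambda>t. g t - h t)"
  by (simp add: d_p_def nq_def M_eq)

lemma fconv_fin:
  assumes q: "0 < q" and f: "Lq MM q f" and b: "Lq MM q b"
  shows "Lq MM q (fconv x N \<alpha> (ennreal q) f b) \<and> (AE y in MM. Top x N \<alpha> f b (fconv x N \<alpha> (ennreal q) f b) y = fconv x N \<alpha> (ennreal q) f b y)"
proof -
  have "fconv x N \<alpha> (ennreal q) f b = (SOME g. Lq MM q g \<and> (AE y in MM. Top x N \<alpha> f b g y = g y))"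
    unfolding fconv_def M_eq using Lp_mem_fin[OF q, unfolded M_eq] by simp
  then show ?thesis using someI_ex[OF exist_fin[OF q f b]] by simp
qed

lemma fconv_inf:
  assumes f: "Linf MM f" and b: "Linf MM b"
  shows "Linf MM (fconv x N \<alpha> top f b) \<and> (AE y in MM. Top x N \<alpha> f b (fconv x N \<alpha> top f b) y = fconv x N \<alpha> top f b y)"
proof -
  have "fconv x N \<alpha> top f b = (SOME g. Linf MM g \<and> (AE y in MM. Top x N \<alpha> f b g y = g y))"
    unfolding fconv_def M_eq using Lp_mem_top[unfolded M_eq] by simp
  then show ?thesis using someI_ex[OF exist_inf[OF f b]] by simp
qed

lemma ge1_cases:
  assumes p: "1 \<le> (p::ennreal)"
  obtains "p = top" | q where "p = ennreal q" "1 \<le> q"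
proof (cases "p = top")
  case True then show ?thesis using that by blast
next
  case False
  then obtain q where pq: "p = ennreal q" and q0: "0 \<le> q" by (cases p) auto
  have "ennreal 1 \<le> ennreal q" using p pq by (simp only: ennreal_1)
  then have q: "1 \<le> q" by (subst (asm) ennreal_le_iff[OF q0])
  then show ?thesis using that pq by blast
qed

lemma partA1:
  assumes p: "1 \<le> p" and f: "Lp_mem (Imeas x N) p f" and f': "Lp_mem (Imeas x N) p f'" and b: "Lp_mem (Imeas x N) p b"
  shows "Lp_norm (Imeas x N) p (\<lambda>t. fconv x N \<alpha> p f b t - fconv x N \<alpha> p f' b t)
           \<le> 1 / (1 - Lam x N \<alpha>) * Lp_norm (Imeas x N) p (\<lambda>t. f t - f' t)"
  using p
proof (cases rule: ge1_cases)
  case 1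
  have f: "Linf MM f" and f': "Linf MM f'" and b: "Linf MM b" using f f' b unfolding 1 Lp_mem_top by auto
  show ?thesis unfolding 1 Lp_norm_top
    using fconv_inf[OF f b] fconv_inf[OF f' b] by (intro ineq1_inf[OF f f']) auto
next
  case (2 q)
  have qq: "0 < q" using 2 by simp
  have f: "Lq MM q f" and f': "Lq MM q f'" and b: "Lq MM q b" using f f' b unfolding 2 Lp_mem_fin[OF qq] by auto
  show ?thesis unfolding 2 Lp_norm_fin[OF qq]
    using fconv_fin[OF qq f b] fconv_fin[OF qq f' b] by (intro ineq1_fin[OF 2(2) f f']) auto
qed

lemma partA2:
  assumes p: "1 \<le> p" and f: "Lp_mem (Imeas x N) p f" and b: "Lp_mem (Imeas x N) p b" and b': "Lp_mem (Imeas x N) p b'"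
  shows "Lp_norm (Imeas x N) p (\<lambda>t. fconv x N \<alpha> p f b t - fconv x N \<alpha> p f b' t)
           \<le> Lam x N \<alpha> / (1 - Lam x N \<alpha>) * Lp_norm (Imeas x N) p (\<lambda>t. b t - b' t)"
  using p
proof (cases rule: ge1_cases)
  case 1
  have f: "Linf MM f" and b: "Linf MM b" and b': "Linf MM b'" using f b b' unfolding 1 Lp_mem_top by auto
  show ?thesis unfolding 1 Lp_norm_top
    using fconv_inf[OF f b] fconv_inf[OF f b'] by (intro ineq2_inf[OF b b']) auto
next
  case (2 q)
  have qq: "0 < q" using 2 by simp
  have f: "Lq MM q f" and b: "Lq MM q b" and b': "Lq MM q b'" using f b b' unfolding 2 Lp_mem_fin[OF qq] by auto
  show ?thesis unfolding 2 Lp_norm_fin[OF qq]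
    using fconv_fin[OF qq f b] fconv_fin[OF qq f b'] by (intro ineq2_fin[OF 2(2) b b']) auto
qed

lemma partB1:
  assumes p: "0 < p" "p < 1" and f: "Lp_mem (Imeas x N) (ennreal p) f" and f': "Lp_mem (Imeas x N) (ennreal p) f'"
    and b: "Lp_mem (Imeas x N) (ennreal p) b"
  shows "d_p (Imeas x N) p (fconv x N \<alpha> (ennreal p) f b) (fconv x N \<alpha> (ennreal p) f' b)
           \<le> 1 / (1 - Lam x N \<alpha> powr p) * d_p (Imeas x N) p f f'"
proof -
  have f: "Lq MM p f" and f': "Lq MM p f'" and b: "Lq MM p b" using f f' b unfolding Lp_mem_fin[OF p(1)] by auto
  show ?thesis unfolding dp_eq
    using fconv_fin[OF p(1) f b] fconv_fin[OF p(1) f' b] by (intro ineq1_sub[OF p f f']) auto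
qed

lemma partB2:
  assumes p: "0 < p" "p < 1" and f: "Lp_mem (Imeas x N) (ennreal p) f" and b: "Lp_mem (Imeas x N) (ennreal p) b"
    and b': "Lp_mem (Imeas x N) (ennreal p) b'"
  shows "d_p (Imeas x N) p (fconv x N \<alpha> (ennreal p) f b) (fconv x N \<alpha> (ennreal p) f b')
           \<le> Lam x N \<alpha> powr p / (1 - Lam x N \<alpha> powr p) * d_p (Imeas x N) p b b'"
proof -
  have f: "Lq MM p f" and b: "Lq MM p b" and b': "Lq MM p b'" using f b b' unfolding Lp_mem_fin[OF p(1)] by auto
  show ?thesis unfolding dp_eq
    using fconv_fin[OF p(1) f b] fconv_fin[OF p(1) f b'] by (intro ineq2_sub[OF p b b']) auto
qed

end

theorem theorem3p4:
  fixes x :: "nat \<Rightarrow> real" and N :: nat and \<alpha> :: "nat \<Rightarrow> real \<Rightarrow> real"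
  assumes "N \<ge> 2"
    and "\<forall>i<N. x i < x (Suc i)"
    and "\<forall>n\<in>{1..N}. Lp_mem (Imeas x N) (top::ennreal) (\<alpha> n)"
    and "Lam x N \<alpha> < 1"
  shows
   "(\<forall>p::ennreal. 1 \<le> p \<longrightarrow>
      (\<forall>f f' b. Lp_mem (Imeas x N) p f \<and> Lp_mem (Imeas x N) p f' \<and> Lp_mem (Imeas x N) p b \<longrightarrow>
         Lp_norm (Imeas x N) p (\<lambda>t. fconv x N \<alpha> p f b t - fconv x N \<alpha> p f' b t)
           \<le> 1 / (1 - Lam x N \<alpha>) * Lp_norm (Imeas x N) p (\<lambda>t. f t - f' t)) \<and>
      (\<forall>f b b'. Lp_mem (Imeas x N) p f \<and> Lp_mem (Imeas x N) p b \<and> Lp_mem (Imeas x N) p b' \<longrightarrow>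
         Lp_norm (Imeas x N) p (\<lambda>t. fconv x N \<alpha> p f b t - fconv x N \<alpha> p f b' t)
           \<le> Lam x N \<alpha> / (1 - Lam x N \<alpha>) * Lp_norm (Imeas x N) p (\<lambda>t. b t - b' t))) \<and>
    (\<forall>p::real. 0 < p \<and> p < 1 \<longrightarrow>
      (\<forall>f f' b. Lp_mem (Imeas x N) (ennreal p) f \<and> Lp_mem (Imeas x N) (ennreal p) f'
           \<and> Lp_mem (Imeas x N) (ennreal p) b \<longrightarrow>
         d_p (Imeas x N) p (fconv x N \<alpha> (ennreal p) f b) (fconv x N \<alpha> (ennreal p) f' b)
           \<le> 1 / (1 - Lam x N \<alpha> powr p) * d_p (Imeas x N) p f f') \<and>
      (\<forall>f b b'. Lp_mem (Imeas x N) (ennreal p) f \<and> Lp_mem (Imeas x N) (ennreal p) b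
           \<and> Lp_mem (Imeas x N) (ennreal p) b' \<longrightarrow>
         d_p (Imeas x N) p (fconv x N \<alpha> (ennreal p) f b) (fconv x N \<alpha> (ennreal p) f b')
           \<le> Lam x N \<alpha> powr p / (1 - Lam x N \<alpha> powr p) * d_p (Imeas x N) p b b'))"
proof -
  interpret fcs x N \<alpha> using assms by unfold_locales auto
  show ?thesis using partA1 partA2 partB1 partB2 by blast
qed

end
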